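(* Let $n\ge1$ and $k\ge2$ even, and $\alpha_{nk}=(0\,1\,\cdots\,nk)$. (1) For every $\pi\in\Pi_{n,k}$, $\mathrm{cyc}_0(\pi\alpha_{nk})\le nk/2$, with equality if and only if the pairing $\bar\pi$ of the blocks $\bar1,\dots,\bar k$ induced by $\pi$ is a non-crossing pair partition of $\{1,\dots,k\}$ and, whenever blocks $\bar j,\bar l$ with $j<l$ are paired by $\bar\pi$, $\pi((j-1)n+r)=ln+1-r$ for all $1\le r\le n$. (2) $\lim_{N\to\infty}K_{k,n,N}=C_{k/2}$, where $C_p=\frac1{p+1}\binom{2p}{p}$ is the $p$-th Catalan number.
   Context: Pair partitions are identified with fixed-point-free involutions, extended to fix $0$; $\mathrm{cyc}_0$ counts cycles not containing $0$. The set $[nk]=\{1,\dots,nk\}$ is cut into $k$ blocks $\bar j=\{(j-1)n+1,\dots,jn\}$. $\mathcal P_2(n,\dots,n)$ is the set of pair partitions of $[nk]$ in which every pair joins two different blocks; $\Pi_{n,k}$ is the set of $\pi\in\mathcal P_2(n,\dots,n)$ such that whenever $i_1,i_2$ are in the same block, $\pi(i_1),\pi(i_2)$ are in the same block (so $\pi$ induces a pairing $\bar\pi$ of the $k$ blocks). $K_{k,n,N}=\sum_{\pi\in\Pi_{n,k}}N^{-(nk/2-\mathrm{cyc}_0(\pi\alpha_{nk}))}$. *)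

theory Defs
  imports "HOL-Analysis.Analysis"
begin

text \<open>Pair partitions of [m] = {1..m}, identified with fixed-point-free involutions
  of {1..m}, extended by the identity outside {1..m} (in particular fixing 0).\<close>
definition pair_partition :: "nat \<Rightarrow> (nat \<Rightarrow> nat) \<Rightarrow> bool" where
  "pair_partition m \<pi> \<longleftrightarrow>
     (\<forall>i\<in>{1..m}. \<pi> i \<in> {1..m} \<and> \<pi> i \<noteq> i \<and> \<pi> (\<pi> i) = i) \<and>
     (\<forall>i. i \<notin> {1..m} \<longrightarrow> \<pi> i = i)"

text \<open>Index of the block containing i (blocks of size n): block j = {(j-1)n+1..jn}.\<close>
definition blk :: "nat \<Rightarrow> nat \<Rightarrow> nat" where
  "blk n i = (i - 1) div n + 1"

definition P2 :: "nat \<Rightarrow> nat \<Rightarrow> (nat \<Rightarrow> nat) set" where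
  "P2 n k = {\<pi>. pair_partition (n*k) \<pi> \<and> (\<forall>i\<in>{1..n*k}. blk n (\<pi> i) \<noteq> blk n i)}"

definition PiNK :: "nat \<Rightarrow> nat \<Rightarrow> (nat \<Rightarrow> nat) set" where
  "PiNK n k = {\<pi> \<in> P2 n k. \<forall>i1\<in>{1..n*k}. \<forall>i2\<in>{1..n*k}.
        blk n i1 = blk n i2 \<longrightarrow> blk n (\<pi> i1) = blk n (\<pi> i2)}"

definition bar_pi :: "nat \<Rightarrow> (nat \<Rightarrow> nat) \<Rightarrow> nat \<Rightarrow> nat" where
  "bar_pi n \<pi> j = blk n (\<pi> ((j - 1) * n + 1))"

definition noncrossing :: "nat \<Rightarrow> (nat \<Rightarrow> nat) \<Rightarrow> bool" where
  "noncrossing k p \<longleftrightarrow>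
     (\<forall>a b c d. 1 \<le> a \<and> a < b \<and> b < c \<and> c < d \<and> d \<le> k \<longrightarrow>
        \<not> (p a = c \<and> p b = d))"

definition alpha :: "nat \<Rightarrow> nat \<Rightarrow> nat" where
  "alpha m i = (if i < m then i + 1 else if i = m then 0 else i)"

definition cyc_of :: "(nat \<Rightarrow> nat) \<Rightarrow> nat \<Rightarrow> nat set" where
  "cyc_of \<sigma> x = range (\<lambda>j. (\<sigma> ^^ j) x)"

definition cyc0 :: "nat \<Rightarrow> (nat \<Rightarrow> nat) \<Rightarrow> nat" where
  "cyc0 m \<sigma> = card {cyc_of \<sigma> x | x. x \<in> {0..m} \<and> 0 \<notin> cyc_of \<sigma> x}"

definition K :: "nat \<Rightarrow> nat \<Rightarrow> real \<Rightarrow> real" where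
  "K k n N = (\<Sum>\<pi>\<in>PiNK n k.
      N powr (- (real (n*k) / 2 - real (cyc0 (n*k) (\<pi> \<circ> alpha (n*k))))))"

definition catalan :: "nat \<Rightarrow> real" where
  "catalan p = real ((2*p) choose p) / real (p + 1)"

end

theory Submission
  imports Defs "HOL-Combinatorics.Orbits" "HOL-Computational_Algebra.Formal_Power_Series"
begin

definition gt_set :: "nat set \<Rightarrow> nat \<Rightarrow> nat set" where
  "gt_set S x = {y\<in>S. x < y}"

definition nxt :: "nat set \<Rightarrow> nat \<Rightarrow> nat" where
  "nxt S x = (if gt_set S x = {} then 0 else Min (gt_set S x))"

definition stp :: "nat set \<Rightarrow> nat \<Rightarrow> nat" where
  "stp S x = (if x \<in> S then nxt S x else x)"

lemma nxt_in: "finite S \<Longrightarrow> 0 \<in> S \<Longrightarrow> nxt S x \<in> S"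
proof -
  assume a: "finite S" "0 \<in> S"
  have fin: "finite (gt_set S x)" using a unfolding gt_set_def by auto
  show ?thesis
  proof (cases "gt_set S x = {}")
    case False
    have "Min (gt_set S x) \<in> gt_set S x" using Min_in[OF fin False] .
    then show ?thesis using False unfolding nxt_def gt_set_def by auto
  qed (use a in \<open>auto simp: nxt_def\<close>)
qed

lemma nxt_gt: "finite S \<Longrightarrow> y \<in> S \<Longrightarrow> x < y \<Longrightarrow> x < nxt S x \<and> nxt S x \<le> y"
proof -
  assume a: "finite S" "y \<in> S" "x < y"
  hence ne: "gt_set S x \<noteq> {}" and fin: "finite (gt_set S x)" unfolding gt_set_def by auto
  have "Min (gt_set S x) \<in> gt_set S x" using Min_in[OF fin ne] .
  moreover have "Min (gt_set S x) \<le> y" using a fin by (intro Min_le) (auto simp: gt_set_def)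
  ultimately show ?thesis using ne unfolding nxt_def gt_set_def by auto
qed

lemma nxt_none: "\<not>(\<exists>y\<in>S. x < y) \<Longrightarrow> nxt S x = 0"
  unfolding nxt_def gt_set_def by auto

lemma nxt_char: "finite S \<Longrightarrow> z \<in> S \<Longrightarrow> x < z \<Longrightarrow> (\<forall>y\<in>S. x < y \<longrightarrow> z \<le> y) \<Longrightarrow> nxt S x = z"
proof -
  assume a: "finite S" "z \<in> S" "x < z" "\<forall>y\<in>S. x < y \<longrightarrow> z \<le> y"
  have fin: "finite (gt_set S x)" and ne: "gt_set S x \<noteq> {}" using a unfolding gt_set_def by auto
  have m: "Min (gt_set S x) \<in> gt_set S x" using Min_in[OF fin ne] .
  have "Min (gt_set S x) \<le> z" using a fin by (intro Min_le) (auto simp: gt_set_def)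
  moreover have "z \<le> Min (gt_set S x)" using m a by (auto simp: gt_set_def)
  ultimately show ?thesis using ne unfolding nxt_def by auto
qed


lemma nxt_inj: "finite S \<Longrightarrow> 0 \<in> S \<Longrightarrow> inj_on (nxt S) S"
proof (rule inj_onI, rule ccontr)
  fix x y assume a: "finite S" "0 \<in> S" "x \<in> S" "y \<in> S" "nxt S x = nxt S y" "x \<noteq> y"
  have *: "u < v \<Longrightarrow> u \<in> S \<Longrightarrow> v \<in> S \<Longrightarrow> nxt S u \<noteq> nxt S v" for u v
  proof -
    assume b: "u < v" "u \<in> S" "v \<in> S"
    have u1: "u < nxt S u" "nxt S u \<le> v" using nxt_gt[OF a(1) b(3) b(1)] by auto
    show ?thesis
    proof (cases "\<exists>z\<in>S. v < z")
      case True
      then obtain z where "z \<in> S" "v < z" by auto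
      then have "v < nxt S v" using nxt_gt[OF a(1)] by blast
      then show ?thesis using u1 by auto
    next
      case False
      then have "nxt S v = 0" by (rule nxt_none)
      then show ?thesis using u1 by auto
    qed
  qed
  show False using a *[of x y] *[of y x] by (metis linorder_neqE_nat)
qed

lemma stp_permutes: "finite S \<Longrightarrow> 0 \<in> S \<Longrightarrow> stp S permutes S"
proof -
  assume a: "finite S" "0 \<in> S"
  have "nxt S ` S = S" using endo_inj_surj[OF a(1) _ nxt_inj[OF a]] nxt_in[OF a] by blast
  moreover have "inj_on (nxt S) S" using nxt_inj[OF a] .
  ultimately have "bij_betw (nxt S) S S" by (simp add: bij_betw_def)
  then have "bij_betw (stp S) S S" by (rule bij_betw_cong[THEN iffD1, rotated]) (simp add: stp_def)
  then show ?thesis by (rule bij_imp_permutes) (simp add: stp_def)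
qed

definition pairing :: "nat set \<Rightarrow> (nat \<Rightarrow> nat) \<Rightarrow> bool" where
  "pairing S \<pi> \<longleftrightarrow> (\<forall>i\<in>S-{0}. \<pi> i \<in> S-{0} \<and> \<pi> i \<noteq> i \<and> \<pi> (\<pi> i) = i) \<and> (\<forall>i. i \<notin> S-{0} \<longrightarrow> \<pi> i = i)"

definition ncS :: "nat set \<Rightarrow> (nat \<Rightarrow> nat) \<Rightarrow> bool" where
  "ncS S \<pi> \<longleftrightarrow> (\<forall>a b c d. 0<a \<and> a<b \<and> b<c \<and> c<d \<and> a\<in>S \<and> b\<in>S \<and> c\<in>S \<and> d\<in>S \<longrightarrow> \<not>(\<pi> a = c \<and> \<pi> b = d))"

definition cnt :: "(nat \<Rightarrow> nat) \<Rightarrow> nat set \<Rightarrow> nat" where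
  "cnt \<sigma> T = card {orbit \<sigma> x | x. x \<in> T \<and> 0 \<notin> orbit \<sigma> x}"

lemma pairing_invol: "pairing S \<pi> \<Longrightarrow> \<pi> (\<pi> y) = y"
  unfolding pairing_def by (cases "y \<in> S - {0}") auto

lemma pairing_permutes: "pairing S \<pi> \<Longrightarrow> \<pi> permutes S"
proof -
  assume a: "pairing S \<pi>"
  have "bij_betw \<pi> S S"
    by (rule bij_betwI[where g=\<pi>]) (use a in \<open>auto simp: pairing_invol Pi_def pairing_def\<close>)
  then show ?thesis by (rule bij_imp_permutes) (use a in \<open>auto simp: pairing_def\<close>)
qed

lemma perm_sigma: "finite S \<Longrightarrow> 0 \<in> S \<Longrightarrow> pairing S \<pi> \<Longrightarrow> permutation (\<pi> \<circ> stp S)"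
  using permutes_compose[OF stp_permutes pairing_permutes] permutation_permutes by blast

lemma sigma_permutes: "finite S \<Longrightarrow> 0 \<in> S \<Longrightarrow> pairing S \<pi> \<Longrightarrow> (\<pi> \<circ> stp S) permutes S"
  using permutes_compose[OF stp_permutes pairing_permutes] by blast

lemma orb_least: "x \<in> E \<Longrightarrow> (\<forall>y\<in>E. f y \<in> E) \<Longrightarrow> permutation f \<Longrightarrow> orbit f x \<subseteq> E"
proof
  fix z assume a: "x \<in> E" "\<forall>y\<in>E. f y \<in> E" "z \<in> orbit f x"
  from a(3) show "z \<in> E" by induct (use a in auto)
qed

lemma orb_self: "permutation f \<Longrightarrow> x \<in> orbit f x"
  by (rule permutation_self_in_orbit)

lemma orb_eq: "permutation f \<Longrightarrow> y \<in> orbit f x \<Longrightarrow> orbit f y = orbit f x"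
  by (meson orbit_swap orbit_trans permutation_self_in_orbit subsetI subset_antisym)

lemma ins_orbit:
  assumes p1: "permutation \<tau>'" and p2: "permutation (\<tau>'(c := b, b := \<tau>' c))"
    and fb: "\<tau>' b = b" and bc: "b \<noteq> c"
  shows "x \<noteq> b \<Longrightarrow> orbit (\<tau>'(c := b, b := \<tau>' c)) x =
            (if c \<in> orbit \<tau>' x then insert b (orbit \<tau>' x) else orbit \<tau>' x)"
    and "orbit (\<tau>'(c := b, b := \<tau>' c)) b = insert b (orbit \<tau>' c)"
proof -
  let ?t = "\<tau>'(c := b, b := \<tau>' c)"
  have nb: "b \<notin> orbit \<tau>' x" if "x \<noteq> b" for x
  proof
    assume "b \<in> orbit \<tau>' x"
    then have "orbit \<tau>' b = orbit \<tau>' x" using orb_eq[OF p1] by blast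
    moreover have "orbit \<tau>' b = {b}" using fb orbit_eq_singleton_iff by metis
    ultimately show False using orb_self[OF p1, of x] that by auto
  qed
  show A: "orbit ?t x = (if c \<in> orbit \<tau>' x then insert b (orbit \<tau>' x) else orbit \<tau>' x)"
    if xb: "x \<noteq> b" for x
  proof (rule subset_antisym)
    show "orbit ?t x \<subseteq> (if c \<in> orbit \<tau>' x then insert b (orbit \<tau>' x) else orbit \<tau>' x)"
    proof (rule orb_least[OF _ _ p2])
      show "x \<in> (if c \<in> orbit \<tau>' x then insert b (orbit \<tau>' x) else orbit \<tau>' x)"
        using orb_self[OF p1] by auto
      show "\<forall>y\<in>(if c \<in> orbit \<tau>' x then insert b (orbit \<tau>' x) else orbit \<tau>' x).
              ?t y \<in> (if c \<in> orbit \<tau>' x then insert b (orbit \<tau>' x) else orbit \<tau>' x)"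
        using nb[OF xb] orbit.step[of _ \<tau>' x] by auto
    qed
    have sub: "orbit \<tau>' x \<subseteq> orbit ?t x"
    proof (rule orb_least[OF _ _ p1])
      show "x \<in> orbit ?t x" using orb_self[OF p2] .
      show "\<forall>y\<in>orbit ?t x. \<tau>' y \<in> orbit ?t x"
      proof
        fix y assume y: "y \<in> orbit ?t x"
        show "\<tau>' y \<in> orbit ?t x"
        proof (cases "y = c")
          case True
          have "?t y \<in> orbit ?t x" using orbit.step[OF y] .
          then have "?t (?t y) \<in> orbit ?t x" using orbit.step by metis
          then show ?thesis using True bc by simp
        next
          case False
          then show ?thesis using y fb orbit.step[OF y] by (cases "y = b") auto
        qed
      qed
    qed
    moreover have "c \<in> orbit \<tau>' x \<Longrightarrow> b \<in> orbit ?t x"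
    proof -
      assume "c \<in> orbit \<tau>' x"
      then have "c \<in> orbit ?t x" using sub by auto
      then have "?t c \<in> orbit ?t x" by (rule orbit.step)
      then show ?thesis using bc by simp
    qed
    ultimately show "(if c \<in> orbit \<tau>' x then insert b (orbit \<tau>' x) else orbit \<tau>' x) \<subseteq> orbit ?t x"
      by auto
  qed
  have tcb: "\<tau>' c \<noteq> b"
  proof
    assume "\<tau>' c = b"
    then have "\<tau>' c = \<tau>' b" using fb by simp
    moreover have "inj \<tau>'" using p1 permutation_permutes permutes_inj by blast
    ultimately show False using bc by (metis injD)
  qed
  have "orbit ?t b = orbit ?t (?t b)" using permutation_orbit_step[OF p2] by metis
  also have "\<dots> = orbit ?t (\<tau>' c)" using bc by simp
  also have "\<dots> = insert b (orbit \<tau>' (\<tau>' c))"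
  proof -
    have "c \<in> orbit \<tau>' (\<tau>' c)" using permutation_orbit_step[OF p1] orb_self[OF p1] by metis
    then show ?thesis using A[OF tcb] by simp
  qed
  also have "\<dots> = insert b (orbit \<tau>' c)" using permutation_orbit_step[OF p1] by metis
  finally show "orbit ?t b = insert b (orbit \<tau>' c)" .
qed

lemma cnt_ins:
  assumes p1: "permutation \<tau>'" and p2: "permutation (\<tau>'(c := b, b := \<tau>' c))"
    and fb: "\<tau>' b = b" and bc: "b \<noteq> c" and fin: "finite T" and bT: "b \<in> T" and cT: "c \<in> T"
    and b0: "b \<noteq> 0"
  shows "cnt (\<tau>'(c := b, b := \<tau>' c)) T = cnt \<tau>' (T - {b})"
proof -
  let ?t = "\<tau>'(c := b, b := \<tau>' c)"
  define F where "F = (\<lambda>Q. if c \<in> Q then insert b Q else Q)"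
  have nb: "b \<notin> orbit \<tau>' x" if "x \<noteq> b" for x
  proof
    assume "b \<in> orbit \<tau>' x"
    then have "orbit \<tau>' b = orbit \<tau>' x" using orb_eq[OF p1] by blast
    moreover have "orbit \<tau>' b = {b}" using fb orbit_eq_singleton_iff by metis
    ultimately show False using orb_self[OF p1, of x] that by auto
  qed
  note I = ins_orbit[OF p1 p2 fb bc]
  have eq: "{orbit ?t x | x. x \<in> T \<and> 0 \<notin> orbit ?t x} =
        F ` {orbit \<tau>' x | x. x \<in> T - {b} \<and> 0 \<notin> orbit \<tau>' x}"
  proof (rule set_eqI, rule iffI)
    fix Q assume "Q \<in> {orbit ?t x | x. x \<in> T \<and> 0 \<notin> orbit ?t x}"
    then obtain x where x: "x \<in> T" "0 \<notin> orbit ?t x" "Q = orbit ?t x" by auto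
    show "Q \<in> F ` {orbit \<tau>' x | x. x \<in> T - {b} \<and> 0 \<notin> orbit \<tau>' x}"
    proof (cases "x = b")
      case True
      have "Q = F (orbit \<tau>' c)" using x True I(2) orb_self[OF p1, of c] by (simp add: F_def)
      moreover have "0 \<notin> orbit \<tau>' c" using x True I(2) by auto
      ultimately show ?thesis using cT bc by blast
    next
      case False
      have "Q = F (orbit \<tau>' x)" using x False I(1)[OF False] by (simp add: F_def)
      moreover have "0 \<notin> orbit \<tau>' x" using x False I(1)[OF False] by (auto split: if_splits)
      ultimately show ?thesis using x False by blast
    qed
  next
    fix Q assume "Q \<in> F ` {orbit \<tau>' x | x. x \<in> T - {b} \<and> 0 \<notin> orbit \<tau>' x}"
    then obtain x where x: "x \<in> T" "x \<noteq> b" "0 \<notin> orbit \<tau>' x" "Q = F (orbit \<tau>' x)" by auto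
    have "Q = orbit ?t x" using I(1)[OF x(2)] x by (simp add: F_def)
    moreover have "0 \<notin> orbit ?t x" using I(1)[OF x(2)] x b0 by auto
    ultimately show "Q \<in> {orbit ?t x | x. x \<in> T \<and> 0 \<notin> orbit ?t x}" using x by blast
  qed
  have inj: "inj_on F {orbit \<tau>' x | x. x \<in> T - {b} \<and> 0 \<notin> orbit \<tau>' x}"
  proof (rule inj_onI)
    fix Q1 Q2 assume a: "Q1 \<in> {orbit \<tau>' x | x. x \<in> T - {b} \<and> 0 \<notin> orbit \<tau>' x}"
      "Q2 \<in> {orbit \<tau>' x | x. x \<in> T - {b} \<and> 0 \<notin> orbit \<tau>' x}" "F Q1 = F Q2"
    have "b \<notin> Q1" "b \<notin> Q2" using a nb by auto
    then have "Q1 = F Q1 - {b}" "Q2 = F Q2 - {b}" by (auto simp: F_def)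
    then show "Q1 = Q2" using a(3) by simp
  qed
  show ?thesis unfolding cnt_def eq using card_image[OF inj] by simp
qed

lemma cnt_fix:
  assumes p: "permutation \<tau>" and fa: "\<tau> a = a" and aT: "a \<notin> T" and a0: "a \<noteq> 0" and fin: "finite T"
  shows "cnt \<tau> (insert a T) = Suc (cnt \<tau> T)"
proof -
  have oa: "orbit \<tau> a = {a}" using fa orbit_eq_singleton_iff by metis
  have eq: "{orbit \<tau> x | x. x \<in> insert a T \<and> 0 \<notin> orbit \<tau> x} =
      insert {a} {orbit \<tau> x | x. x \<in> T \<and> 0 \<notin> orbit \<tau> x}"
    using oa a0 by auto
  have nin: "{a} \<notin> {orbit \<tau> x | x. x \<in> T \<and> 0 \<notin> orbit \<tau> x}"
  proof
    assume "{a} \<in> {orbit \<tau> x | x. x \<in> T \<and> 0 \<notin> orbit \<tau> x}"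
    then obtain x where "x \<in> T" "{a} = orbit \<tau> x" by auto
    then show False using orb_self[OF p, of x] aT by auto
  qed
  have "finite {orbit \<tau> x | x. x \<in> T \<and> 0 \<notin> orbit \<tau> x}" using fin by simp
  then show ?thesis unfolding cnt_def eq using nin by simp
qed


lemma adj_step:
  assumes fin: "finite S" and S0: "0 \<in> S" and pr: "pairing S \<pi>" and aS: "a \<in> S" and a0: "a \<noteq> 0"
    and adj: "\<pi> a = nxt S a"
  defines "a' \<equiv> nxt S a"
  defines "S' \<equiv> S - {a, a'}" and "\<pi>' \<equiv> \<pi>(a := a, a' := a')"
  shows "pairing S' \<pi>'" "finite S'" "0 \<in> S'" "card S' + 2 = card S"
    "cnt (\<pi> \<circ> stp S) S = Suc (cnt (\<pi>' \<circ> stp S') S')" "ncS S \<pi> \<longleftrightarrow> ncS S' \<pi>'"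
proof -
  have h: "\<pi> a \<in> S - {0} \<and> \<pi> a \<noteq> a" using pr aS a0 unfolding pairing_def by auto
  have a'S: "a' \<in> S" "a' \<noteq> 0" "a' \<noteq> a" "\<pi> a = a'" using h adj unfolding a'_def by auto
  have pa': "\<pi> a' = a" using pairing_invol[OF pr, of a] a'S by simp
  have aa': "a < a'"
  proof (cases "\<exists>y\<in>S. a < y")
    case True
    then obtain y where "y \<in> S" "a < y" by auto
    then show ?thesis using nxt_gt[OF fin \<open>y \<in> S\<close> \<open>a < y\<close>] unfolding a'_def by simp
  next
    case False
    then show ?thesis using nxt_none[OF False] a'S unfolding a'_def by simp
  qed
  have betw: "\<forall>y\<in>S. a < y \<longrightarrow> a' \<le> y"
  proof (intro ballI impI)
    fix y assume "y \<in> S" "a < y"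
    then show "a' \<le> y" using nxt_gt[OF fin \<open>y \<in> S\<close> \<open>a < y\<close>] unfolding a'_def by simp
  qed
  define p where "p = Max {y\<in>S. y < a}"
  have pfin: "finite {y\<in>S. y < a}" and pne: "{y\<in>S. y < a} \<noteq> {}" using fin S0 a0 by auto
  have pS: "p \<in> S" "p < a" using Max_in[OF pfin pne] unfolding p_def by auto
  have pmax: "\<forall>y\<in>S. y < a \<longrightarrow> y \<le> p" using Max_ge[OF pfin] unfolding p_def by auto
  have np: "nxt S p = a"
    by (rule nxt_char[OF fin aS pS(2)]) (use pmax in \<open>auto simp: not_less[symmetric]\<close>)
  show finS': "finite S'" using fin unfolding S'_def by auto
  show S'0: "0 \<in> S'" using S0 a0 a'S unfolding S'_def by auto
  show "card S' + 2 = card S"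
  proof -
    have c2: "card {a, a'} = 2" using a'S by simp
    have sub: "{a, a'} \<subseteq> S" using aS a'S by auto
    have "card S' = card S - card {a, a'}" unfolding S'_def by (rule card_Diff_subset) (use sub in auto)
    moreover have "card {a, a'} \<le> card S" by (rule card_mono[OF fin sub])
    ultimately show ?thesis using c2 by simp
  qed
  show prS': "pairing S' \<pi>'"
  proof -
    have "\<forall>i\<in>S'-{0}. \<pi>' i \<in> S'-{0} \<and> \<pi>' i \<noteq> i \<and> \<pi>' (\<pi>' i) = i"
    proof
      fix i assume i: "i \<in> S' - {0}"
      then have i2: "i \<in> S - {0}" "i \<noteq> a" "i \<noteq> a'" unfolding S'_def by auto
      have "\<pi> i \<noteq> a" using pa' a'S i2 pairing_invol[OF pr, of i] by metis
      moreover have "\<pi> i \<noteq> a'" using pa' a'S i2 pairing_invol[OF pr, of i] by metis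
      ultimately show "\<pi>' i \<in> S'-{0} \<and> \<pi>' i \<noteq> i \<and> \<pi>' (\<pi>' i) = i"
        using pr i2 unfolding pairing_def S'_def \<pi>'_def by auto
    qed
    moreover have "\<forall>i. i \<notin> S'-{0} \<longrightarrow> \<pi>' i = i"
      using pr unfolding pairing_def S'_def \<pi>'_def by auto
    ultimately show ?thesis unfolding pairing_def by blast
  qed
  show "ncS S \<pi> \<longleftrightarrow> ncS S' \<pi>'"
  proof
    assume nc: "ncS S \<pi>"
    show "ncS S' \<pi>'" unfolding ncS_def
    proof (intro allI impI notI)
      fix w x y z assume h: "0 < w \<and> w < x \<and> x < y \<and> y < z \<and> w \<in> S' \<and> x \<in> S' \<and> y \<in> S' \<and> z \<in> S'"
        "\<pi>' w = y \<and> \<pi>' x = z"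
      then have "\<pi> w = y \<and> \<pi> x = z" unfolding \<pi>'_def S'_def by auto
      then show False using nc h unfolding ncS_def S'_def by blast
    qed
  next
    assume nc: "ncS S' \<pi>'"
    show "ncS S \<pi>" unfolding ncS_def
    proof (intro allI impI notI)
      fix w x y z assume h: "0 < w \<and> w < x \<and> x < y \<and> y < z \<and> w \<in> S \<and> x \<in> S \<and> y \<in> S \<and> z \<in> S"
        "\<pi> w = y \<and> \<pi> x = z"
      have inv: "\<And>u. \<pi> (\<pi> u) = u" using pairing_invol[OF pr] .
      have ax: "\<And>u. u \<in> S \<Longrightarrow> a < u \<Longrightarrow> a' \<le> u" using betw by blast
      have "w \<noteq> a"
      proof
        assume "w = a" then have "y = a'" using h a'S by simp
        then show False using ax[of x] h \<open>w = a\<close> by auto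
      qed
      moreover have "w \<noteq> a'"
      proof
        assume "w = a'" then have "y = a" using h pa' by simp
        then show False using h aa' \<open>w = a'\<close> by auto
      qed
      moreover have "x \<noteq> a"
      proof
        assume "x = a" then have "z = a'" using h a'S by simp
        then show False using ax[of y] h \<open>x = a\<close> by auto
      qed
      moreover have "x \<noteq> a'"
      proof
        assume "x = a'" then have "z = a" using h pa' by simp
        then show False using h aa' \<open>x = a'\<close> by auto
      qed
      moreover have "y \<noteq> a"
      proof
        assume "y = a" then have "w = a'" using h inv[of w] a'S by metis
        then show False using h aa' \<open>y = a\<close> by auto
      qed
      moreover have "y \<noteq> a'"
      proof
        assume "y = a'" then have "w = a" using h inv[of w] pa' by metis
        then show False using ax[of x] h \<open>y = a'\<close> by auto
      qed
      moreover have "z \<noteq> a"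
      proof
        assume "z = a" then have "x = a'" using h inv[of x] a'S by metis
        then show False using h aa' \<open>z = a\<close> by auto
      qed
      moreover have "z \<noteq> a'"
      proof
        assume "z = a'" then have "x = a" using h inv[of x] pa' by metis
        then show False using ax[of y] h \<open>z = a'\<close> by auto
      qed
      ultimately have "\<pi>' w = y \<and> \<pi>' x = z" "w \<in> S'" "x \<in> S'" "y \<in> S'" "z \<in> S'"
        using h unfolding \<pi>'_def S'_def by auto
      then show False using nc h unfolding ncS_def by blast
    qed
  qed
  let ?s = "\<pi> \<circ> stp S" and ?s' = "\<pi>' \<circ> stp S'"
  have pS': "p \<in> S'" using pS aa' unfolding S'_def by auto
  have gt_eq: "gt_set S' p = gt_set S a'"
    unfolding gt_set_def S'_def using pS aa' betw pmax
    by (auto simp: not_less) (meson le_neq_implies_less not_less)+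
  have nS'p: "nxt S' p = nxt S a'" unfolding nxt_def gt_eq ..
  have nn: "nxt S a' \<notin> {a, a'}"
  proof (cases "\<exists>y\<in>S. a' < y")
    case True
    then obtain y where "y \<in> S" "a' < y" by auto
    then have "a' < nxt S a'" using nxt_gt[OF fin \<open>y \<in> S\<close> \<open>a' < y\<close>] by simp
    then show ?thesis using aa' by auto
  next
    case False
    then show ?thesis using nxt_none a'S a0 by auto
  qed
  have other: "nxt S' z = nxt S z \<and> nxt S z \<notin> {a, a'}" if z: "z \<in> S'" "z \<noteq> p" for z
  proof (cases "\<exists>y\<in>S. z < y")
    case False
    then have "\<not> (\<exists>y\<in>S'. z < y)" unfolding S'_def by auto
    then show ?thesis using nxt_none[OF False] nxt_none[of S' z] a0 a'S by simp
  next
    case True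
    have zS: "z \<in> S" "z \<noteq> a" "z \<noteq> a'" using z unfolding S'_def by auto
    define w where "w = nxt S z"
    obtain y0 where y0: "y0 \<in> S" "z < y0" using True by auto
    have w: "w \<in> S" "z < w" "\<forall>y\<in>S. z < y \<longrightarrow> w \<le> y"
      using nxt_in[OF fin S0] nxt_gt[OF fin y0] nxt_gt[OF fin] unfolding w_def by auto
    have wa: "w \<noteq> a"
    proof
      assume "w = a"
      then have "z < p" using pmax zS w z(2) by (meson le_neq_implies_less)
      then show False using w pS \<open>w = a\<close> by fastforce
    qed
    have wa': "w \<noteq> a'"
    proof
      assume "w = a'"
      show False
      proof (cases "z < a")
        case True
        then show False using w aS aa' \<open>w = a'\<close> by fastforce
      next
        case False
        then have "a < z" using zS by auto
        then show False using betw zS w \<open>w = a'\<close> by fastforce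
      qed
    qed
    have "nxt S' z = w"
      by (rule nxt_char[OF finS']) (use w wa wa' in \<open>auto simp: S'_def\<close>)
    then show ?thesis using wa wa' w_def by auto
  qed
  have seq: "?s = ?s'(p := a', a' := ?s' p)"
  proof
    fix z
    show "?s z = (?s'(p := a', a' := ?s' p)) z"
    proof (cases "z = a'")
      case True
      have "?s' p = \<pi>' (nxt S a')" using pS' nS'p by (simp add: stp_def)
      also have "\<dots> = \<pi> (nxt S a')" using nn unfolding \<pi>'_def by auto
      finally show ?thesis using True a'S by (simp add: stp_def)
    next
      case za': False
      show ?thesis
      proof (cases "z = p")
        case True
        then show ?thesis using pS np a'S pS aa' by (auto simp: stp_def)
      next
        case zp: False
        show ?thesis
        proof (cases "z = a")
          case True
          have "a \<notin> S'" unfolding S'_def by auto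
          then show ?thesis using True pa' aS za' zp by (simp add: stp_def \<pi>'_def a'_def[symmetric])
        next
          case za: False
          show ?thesis
          proof (cases "z \<in> S")
            case True
            then have "z \<in> S'" using za za' unfolding S'_def by auto
            then show ?thesis using other[of z] zp za za' True by (auto simp: stp_def \<pi>'_def)
          next
            case False
            then have "z \<notin> S'" unfolding S'_def by auto
            then show ?thesis using False za za' zp pr unfolding pairing_def
              by (auto simp: stp_def \<pi>'_def)
          qed
        qed
      qed
    qed
  qed
  have perm: "permutation ?s" using perm_sigma[OF fin S0 pr] .
  have perm': "permutation ?s'" using perm_sigma[OF finS' S'0 prS'] .
  have perm2: "permutation (?s'(p := a', a' := ?s' p))" using perm unfolding seq .
  have fixa: "?s a = a" using pa' aS by (simp add: stp_def a'_def[symmetric])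
  have s'a': "?s' a' = a'" unfolding S'_def \<pi>'_def by (simp add: stp_def)
  have "cnt ?s S = cnt ?s (insert a (S - {a}))" using aS by (simp add: insert_absorb)
  also have "\<dots> = Suc (cnt ?s (S - {a}))" by (rule cnt_fix[OF perm fixa _ a0]) (use fin in auto)
  also have "cnt ?s (S - {a}) = cnt ?s' (S - {a} - {a'})"
    unfolding seq by (rule cnt_ins[OF perm' perm2 s'a']) (use fin a'S pS pS' aa' in \<open>auto simp: S'_def\<close>)
  also have "S - {a} - {a'} = S'" unfolding S'_def by auto
  finally show "cnt ?s S = Suc (cnt ?s' S')" .
qed

lemma no_adj:
  assumes fin: "finite S" and S0: "0 \<in> S" and pr: "pairing S \<pi>" and ne: "S \<noteq> {0}"
    and na: "\<forall>x\<in>S-{0}. \<pi> x \<noteq> nxt S x"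
  shows "2 * cnt (\<pi> \<circ> stp S) S + 2 \<le> card S"
proof -
  let ?s = "\<pi> \<circ> stp S"
  have perm: "permutation ?s" using perm_sigma[OF fin S0 pr] .
  have pS: "?s permutes S" using sigma_permutes[OF fin S0 pr] .
  have inv: "\<And>u. \<pi> (\<pi> u) = u" using pairing_invol[OF pr] .
  have nofix: "?s z \<noteq> z" if z: "z \<in> S" for z
  proof (cases "z = 0")
    case True
    obtain y where y: "y \<in> S" "y \<noteq> 0" using ne S0 by auto
    have "0 < nxt S 0" using nxt_gt[OF fin y(1)] y by simp
    moreover have "nxt S 0 \<in> S" using nxt_in[OF fin S0] .
    ultimately have "\<pi> (nxt S 0) \<in> S - {0}" using pr unfolding pairing_def by auto
    then show ?thesis using True S0 by (auto simp: stp_def)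
  next
    case False
    show ?thesis
    proof
      assume "?s z = z"
      then have "\<pi> (nxt S z) = z" using z by (simp add: stp_def)
      then have "\<pi> z = nxt S z" using inv by metis
      then show False using na z False by auto
    qed
  qed
  define C where "C = {orbit ?s x | x. x \<in> S}"
  have finC: "finite C" using fin unfolding C_def by simp
  have sub: "orbit ?s x \<subseteq> S" if "x \<in> S" for x using permutes_orbit_subset[OF pS that] .
  have UC: "\<Union>C = S"
    using sub orb_self[OF perm] unfolding C_def by blast
  have disj: "pairwise disjnt C"
  proof (rule pairwiseI)
    fix A B assume "A \<in> C" "B \<in> C" "A \<noteq> B"
    then obtain x y where "A = orbit ?s x" "B = orbit ?s y" unfolding C_def by auto
    then show "disjnt A B" using orb_eq[OF perm] \<open>A \<noteq> B\<close> unfolding disjnt_def by blast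
  qed
  have finA: "\<And>A. A \<in> C \<Longrightarrow> finite A" using sub fin finite_subset unfolding C_def by blast
  have c2: "2 \<le> card A" if AC: "A \<in> C" for A
  proof -
    obtain x where x: "x \<in> S" "A = orbit ?s x" using AC unfolding C_def by auto
    have "{x, ?s x} \<subseteq> A" using x orb_self[OF perm] orbit.base[of ?s x] by auto
    moreover have "card {x, ?s x} = 2" using nofix[OF x(1)] by auto
    ultimately show ?thesis using card_mono[OF finA[OF AC]] by metis
  qed
  have "card S = sum card C" using card_Union_disjoint[OF disj finA] UC by simp
  moreover have "sum (\<lambda>_. 2) C \<le> sum card C" by (rule sum_mono) (use c2 in auto)
  ultimately have le: "2 * card C \<le> card S" by simp
  have eqc: "{orbit ?s x | x. x \<in> S \<and> 0 \<notin> orbit ?s x} = C - {orbit ?s 0}"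
    using orb_self[OF perm] orb_eq[OF perm] S0 unfolding C_def by blast
  have "orbit ?s 0 \<in> C" using S0 unfolding C_def by auto
  then have "cnt ?s S + 1 = card C" unfolding cnt_def eqc using finC
    by (simp add: card_Diff_singleton) (metis One_nat_def Suc_pred card_gt_0_iff empty_iff)
  then show ?thesis using le by simp
qed

lemma nc_adj:
  assumes fin: "finite S" and S0: "0 \<in> S" and pr: "pairing S \<pi>" and ne: "S \<noteq> {0}"
    and nc: "ncS S \<pi>"
  shows "\<exists>x\<in>S-{0}. \<pi> x = nxt S x"
proof -
  have inv: "\<And>u. \<pi> (\<pi> u) = u" using pairing_invol[OF pr] .
  have pS: "\<And>u. u \<in> S - {0} \<Longrightarrow> \<pi> u \<in> S - {0} \<and> \<pi> u \<noteq> u" using pr unfolding pairing_def by auto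
  have "S - {0} \<noteq> {}" using ne S0 by auto
  then obtain y where y: "y \<in> S - {0}" by blast
  have "\<exists>x. x \<in> S - {0} \<and> x < \<pi> x"
  proof (cases "y < \<pi> y")
    case True then show ?thesis using y by auto
  next
    case False
    then have "\<pi> y < \<pi> (\<pi> y)" using pS[OF y] inv[of y] by auto
    then show ?thesis using pS[OF y] by blast
  qed
  then obtain x0 where "x0 \<in> S - {0} \<and> x0 < \<pi> x0" by blast
  then obtain a where a: "a \<in> S - {0}" "a < \<pi> a"
    and amin: "\<forall>b. b \<in> S - {0} \<and> b < \<pi> b \<longrightarrow> \<pi> a - a \<le> \<pi> b - b"
    using ex_has_least_nat[of "\<lambda>x. x \<in> S - {0} \<and> x < \<pi> x" x0 "\<lambda>x. \<pi> x - x"] by blast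
  have paS: "\<pi> a \<in> S - {0}" using pS[OF a(1)] by auto
  define w where "w = nxt S a"
  have w: "a < w" "w \<le> \<pi> a" using nxt_gt[OF fin _ a(2)] paS unfolding w_def by auto
  have "w = \<pi> a"
  proof (rule ccontr)
    assume "w \<noteq> \<pi> a"
    then have wl: "w < \<pi> a" using w by auto
    have wS: "w \<in> S - {0}" using nxt_in[OF fin S0, of a] w unfolding w_def by auto
    have pw: "\<pi> w \<in> S - {0}" "\<pi> w \<noteq> w" using pS[OF wS] by auto
    have pwa: "\<pi> w \<noteq> a" using inv[of w] w by (metis less_irrefl wl)
    have pwpa: "\<pi> w \<noteq> \<pi> a" using inv w by (metis less_irrefl)
    consider "\<pi> w < a" | "a < \<pi> w \<and> \<pi> w < \<pi> a" | "\<pi> a < \<pi> w" using pwa pwpa by linarith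
    then show False
    proof cases
      case 1
      have "\<not> (\<pi> (\<pi> w) = w \<and> \<pi> a = \<pi> a)"
        using nc pw 1 w wl a paS wS unfolding ncS_def by (metis Diff_iff bot_nat_0.not_eq_extremum insertI1)
      then show False using inv by simp
    next
      case 2
      show False
      proof (cases "w < \<pi> w")
        case True
        then have "\<pi> a - a \<le> \<pi> w - w" using amin wS by blast
        then show False using 2 w by linarith
      next
        case False
        then have "\<pi> w < \<pi> (\<pi> w)" using pw inv[of w] by auto
        then have "\<pi> a - a \<le> \<pi> (\<pi> w) - \<pi> w" using amin pw by blast
        then show False using 2 w wl inv[of w] by linarith
      qed
    next
      case 3
      have "\<not> (\<pi> a = \<pi> a \<and> \<pi> w = \<pi> w)"
        using nc pw 3 w wl a paS wS unfolding ncS_def by (metis Diff_iff bot_nat_0.not_eq_extremum insertI1)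
      then show False by simp
    qed
  qed
  then have "\<pi> a = nxt S a" unfolding w_def by simp
  then show ?thesis using a(1) by blast
qed

theorem A_main:
  "finite S \<Longrightarrow> 0 \<in> S \<Longrightarrow> pairing S \<pi> \<Longrightarrow>
     2 * cnt (\<pi> \<circ> stp S) S + 1 \<le> card S \<and> (2 * cnt (\<pi> \<circ> stp S) S + 1 = card S \<longleftrightarrow> ncS S \<pi>)"
proof (induction "card S" arbitrary: S \<pi> rule: less_induct)
  case less
  note fin = less.prems(1) and S0 = less.prems(2) and pr = less.prems(3)
  show ?case
  proof (cases "S = {0}")
    case True
    have "{orbit (\<pi> \<circ> stp S) x | x. x \<in> S \<and> 0 \<notin> orbit (\<pi> \<circ> stp S) x} = {}"
      using True orb_self[OF perm_sigma[OF fin S0 pr]] by auto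
    then have "cnt (\<pi> \<circ> stp S) S = 0" unfolding cnt_def by (metis card.empty)
    moreover have "ncS S \<pi>" using True unfolding ncS_def by auto
    ultimately show ?thesis using True by simp
  next
    case ne: False
    show ?thesis
    proof (cases "\<exists>x\<in>S-{0}. \<pi> x = nxt S x")
      case True
      then obtain a where a: "a \<in> S" "a \<noteq> 0" "\<pi> a = nxt S a" by auto
      note st = adj_step[OF fin S0 pr a]
      define S' where "S' = S - {a, nxt S a}"
      define \<pi>' where "\<pi>' = \<pi>(a := a, nxt S a := nxt S a)"
      have IH: "2 * cnt (\<pi>' \<circ> stp S') S' + 1 \<le> card S' \<and>
          (2 * cnt (\<pi>' \<circ> stp S') S' + 1 = card S' \<longleftrightarrow> ncS S' \<pi>')"
        using less.hyps[of S' \<pi>'] st unfolding S'_def \<pi>'_def by simp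
      have c: "card S' + 2 = card S" "cnt (\<pi> \<circ> stp S) S = Suc (cnt (\<pi>' \<circ> stp S') S')"
        "ncS S \<pi> \<longleftrightarrow> ncS S' \<pi>'" using st unfolding S'_def \<pi>'_def by auto
      show ?thesis using IH c by auto
    next
      case False
      have "2 * cnt (\<pi> \<circ> stp S) S + 2 \<le> card S" using no_adj[OF fin S0 pr ne] False by blast
      moreover have "\<not> ncS S \<pi>" using nc_adj[OF fin S0 pr ne] False by blast
      ultimately show ?thesis by simp
    qed
  qed
qed


lemma alpha_stp: "alpha m = stp {0..m}"
proof
  fix i
  show "alpha m i = stp {0..m} i"
  proof (cases "i < m")
    case True
    have "nxt {0..m} i = i + 1" by (rule nxt_char) (use True in auto)
    then show ?thesis using True by (simp add: alpha_def stp_def)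
  next
    case False
    then have "\<not> (\<exists>y\<in>{0..m}. i < y)" by auto
    then show ?thesis using False nxt_none by (auto simp add: alpha_def stp_def)
  qed
qed

lemma pp_pairing: "pair_partition m \<pi> \<longleftrightarrow> pairing {0..m} \<pi>"
proof -
  have e: "{0..m} - {0} = {1..m}" by auto
  show ?thesis unfolding pair_partition_def pairing_def e by (rule refl)
qed

lemma cyc0_cnt: "permutation \<sigma> \<Longrightarrow> cyc0 m \<sigma> = cnt \<sigma> {0..m}"
proof -
  assume p: "permutation \<sigma>"
  have "cyc_of \<sigma> x = orbit \<sigma> x" for x
    unfolding cyc_of_def orbit_altdef_permutation[OF p] by auto
  then show ?thesis unfolding cyc0_def cnt_def by simp
qed

lemma nc_eq: "ncS {0..m} \<pi> \<longleftrightarrow> noncrossing m \<pi>"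
proof
  assume h: "ncS {0..m} \<pi>"
  show "noncrossing m \<pi>" unfolding noncrossing_def
  proof (intro allI impI)
    fix a b c d :: nat assume "1 \<le> a \<and> a < b \<and> b < c \<and> c < d \<and> d \<le> m"
    then have "0<a \<and> a<b \<and> b<c \<and> c<d \<and> a\<in>{0..m} \<and> b\<in>{0..m} \<and> c\<in>{0..m} \<and> d\<in>{0..m}" by auto
    then show "\<not> (\<pi> a = c \<and> \<pi> b = d)" using h unfolding ncS_def by blast
  qed
next
  assume h: "noncrossing m \<pi>"
  show "ncS {0..m} \<pi>" unfolding ncS_def
  proof (intro allI impI)
    fix a b c d :: nat assume "0<a \<and> a<b \<and> b<c \<and> c<d \<and> a\<in>{0..m} \<and> b\<in>{0..m} \<and> c\<in>{0..m} \<and> d\<in>{0..m}"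
    then have "1 \<le> a \<and> a < b \<and> b < c \<and> c < d \<and> d \<le> m" by auto
    then show "\<not> (\<pi> a = c \<and> \<pi> b = d)" using h unfolding noncrossing_def by blast
  qed
qed

theorem A_final:
  assumes "pair_partition m \<pi>"
  shows "2 * cyc0 m (\<pi> \<circ> alpha m) \<le> m \<and> (2 * cyc0 m (\<pi> \<circ> alpha m) = m \<longleftrightarrow> noncrossing m \<pi>)"
proof -
  have pr: "pairing {0..m} \<pi>" using assms pp_pairing by blast
  have "cyc0 m (\<pi> \<circ> alpha m) = cnt (\<pi> \<circ> stp {0..m}) {0..m}"
    unfolding alpha_stp by (rule cyc0_cnt[OF perm_sigma[OF _ _ pr]]) auto
  then show ?thesis using A_main[OF _ _ pr] nc_eq[of m \<pi>] by simp
qed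

lemma blk_decomp: "n \<ge> 1 \<Longrightarrow> j \<ge> 1 \<Longrightarrow> r \<in> {1..n} \<Longrightarrow> blk n ((j-1)*n + r) = j"
proof -
  assume a: "n \<ge> 1" "j \<ge> 1" "r \<in> {1..n}"
  obtain j' where j: "j = Suc j'" using a by (cases j) auto
  obtain r' where r: "r = Suc r'" "r' < n" using a by (cases r) auto
  have "(j-1)*n + r - 1 = r' + j'*n" using j r by simp
  then have "((j-1)*n + r - 1) div n = j'" using r by simp
  then show ?thesis unfolding blk_def using j by simp
qed

lemma blk_in: "n \<ge> 1 \<Longrightarrow> (j::nat) \<in> {1..k} \<Longrightarrow> r \<in> {1..n} \<Longrightarrow> (j-1)*n + r \<in> {1..n*k}"
proof -
  assume a: "n \<ge> 1" "j \<in> {1..k}" "r \<in> {1..n}"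
  obtain j' where j: "j = Suc j'" using a by (cases j) auto
  have "Suc j' * n \<le> k * n" using a j by (intro mult_le_mono1) auto
  then have "j' * n + r \<le> k * n" using a by simp
  then show ?thesis using a j by (auto simp: mult.commute)
qed

lemma blk_range: "n \<ge> 1 \<Longrightarrow> i \<in> {1..n*k} \<Longrightarrow> blk n i \<in> {1..k}"
proof -
  assume a: "n \<ge> 1" "i \<in> {1..n*k}"
  have "i - 1 < k * n" using a by (cases i) (auto simp: mult.commute)
  then have "(i - 1) div n < k"
    using a by (simp add: div_less_iff_less_mult)
  then show ?thesis unfolding blk_def by auto
qed

lemma blk_bounds: "n \<ge> 1 \<Longrightarrow> i \<ge> 1 \<Longrightarrow> (blk n i - 1) * n + 1 \<le> i \<and> i \<le> blk n i * n"
proof -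
  assume a: "n \<ge> 1" "i \<ge> 1"
  have e: "(i-1) div n * n + (i-1) mod n = i - 1" by (rule div_mult_mod_eq)
  have m: "(i-1) mod n < n" using a by simp
  have b: "blk n i - 1 = (i-1) div n" "blk n i * n = (i-1) div n * n + n" unfolding blk_def by simp_all
  show ?thesis unfolding b using e m a by linarith
qed

lemma blk_decomp2: "n \<ge> 1 \<Longrightarrow> i \<ge> 1 \<Longrightarrow> i = (blk n i - 1) * n + (i - (blk n i - 1) * n) \<and> (i - (blk n i - 1) * n) \<in> {1..n}"
  using blk_bounds[of n i] by (auto simp: algebra_simps)

lemma blk_mono: "i \<le> i' \<Longrightarrow> blk n i \<le> blk n i'"
  unfolding blk_def by (simp add: div_le_mono)

lemma blk_lt: "blk n i < blk n i' \<Longrightarrow> i < i'"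
  using blk_mono[of i' i n] by (meson not_less)

context
  fixes n k :: nat and \<pi> :: "nat \<Rightarrow> nat"
  assumes n1: "n \<ge> 1" and piNK: "\<pi> \<in> PiNK n k"
begin

lemma PF_pp: "pair_partition (n*k) \<pi>" using piNK unfolding PiNK_def P2_def by auto

lemma PF_in: "i \<in> {1..n*k} \<Longrightarrow> \<pi> i \<in> {1..n*k} \<and> \<pi> (\<pi> i) = i \<and> \<pi> i \<noteq> i"
  using PF_pp unfolding pair_partition_def by blast

lemma PF_out: "i \<notin> {1..n*k} \<Longrightarrow> \<pi> i = i"
  using PF_pp unfolding pair_partition_def by blast

lemma PF_inv: "\<pi> (\<pi> i) = i"
  using PF_in PF_out by (cases "i \<in> {1..n*k}") auto

lemma PF_diff: "i \<in> {1..n*k} \<Longrightarrow> blk n (\<pi> i) \<noteq> blk n i"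
  using piNK unfolding PiNK_def P2_def by blast

lemma PF_resp: "i1 \<in> {1..n*k} \<Longrightarrow> i2 \<in> {1..n*k} \<Longrightarrow> blk n i1 = blk n i2 \<Longrightarrow> blk n (\<pi> i1) = blk n (\<pi> i2)"
  using piNK unfolding PiNK_def by blast

lemma PF_first: "j \<in> {1..k} \<Longrightarrow> (j-1)*n + 1 \<in> {1..n*k} \<and> blk n ((j-1)*n + 1) = j"
  using blk_in[OF n1, of j k 1] blk_decomp[OF n1, of j 1] n1 by auto

lemma PF_bar: "i \<in> {1..n*k} \<Longrightarrow> blk n (\<pi> i) = bar_pi n \<pi> (blk n i)"
proof -
  assume i: "i \<in> {1..n*k}"
  have j: "blk n i \<in> {1..k}" using blk_range[OF n1 i] .
  show ?thesis unfolding bar_pi_def using PF_resp[OF i, of "(blk n i - 1)*n + 1"] PF_first[OF j] by simp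
qed

lemma PF_barprops: "j \<in> {1..k} \<Longrightarrow> bar_pi n \<pi> j \<in> {1..k} \<and> bar_pi n \<pi> j \<noteq> j \<and> bar_pi n \<pi> (bar_pi n \<pi> j) = j"
proof -
  assume j: "j \<in> {1..k}"
  define f where "f = (j-1)*n + 1"
  have f: "f \<in> {1..n*k}" "blk n f = j" using PF_first[OF j] unfolding f_def by auto
  have b: "bar_pi n \<pi> j = blk n (\<pi> f)" unfolding bar_pi_def f_def ..
  have pf: "\<pi> f \<in> {1..n*k}" using PF_in[OF f(1)] by auto
  have "bar_pi n \<pi> (bar_pi n \<pi> j) = blk n (\<pi> (\<pi> f))" using PF_bar[OF pf] b by simp
  also have "\<dots> = j" using PF_inv f by simp
  finally show ?thesis using b blk_range[OF n1 pf] PF_diff[OF f(1)] f by simp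
qed

lemma PF_bounds: "i \<in> {1..n*k} \<Longrightarrow> blk n i = l \<Longrightarrow> (l-1)*n + 1 \<le> i \<and> i \<le> l * n"
  using blk_bounds[OF n1, of i] by auto

lemma B_fwd_rev:
  assumes nc: "noncrossing (n*k) \<pi>" and jl: "1 \<le> j" "j < l" "l \<le> k" "bar_pi n \<pi> j = l" and r: "r \<in> {1..n}"
  shows "\<pi> ((j - 1) * n + r) = l * n + 1 - r"
proof -
  define x where "x = (j-1)*n + r"
  have rb: "1 \<le> r" "r \<le> n" using r by auto
  have xin: "x \<in> {1..n*k}" using blk_in[OF n1, of j k r] jl r unfolding x_def by auto
  have bx: "blk n x = j" using blk_decomp[OF n1 jl(1) r] unfolding x_def .
  have bpx: "blk n (\<pi> x) = l" using PF_bar[OF xin] bx jl by simp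
  have pxin: "\<pi> x \<in> {1..n*k}" using PF_in[OF xin] by simp
  have pxb: "(l-1)*n + 1 \<le> \<pi> x" "\<pi> x \<le> l * n" using PF_bounds[OF pxin bpx] by auto
  have jn: "j * n = (j-1)*n + n" using jl by (cases j) auto
  have ln: "l * n = (l-1)*n + n" using jl by (cases l) auto
  have jl2: "j * n \<le> (l-1)*n" using jl by (intro mult_le_mono1) auto
  have kn: "l * n \<le> n * k" using jl by (simp add: mult.commute)
  have inj: "inj_on \<pi> X" for X by (rule inj_onI) (metis PF_inv)
  have blkS: "blk n s = j" if "(j-1)*n + 1 \<le> s" "s \<le> j*n" for s
  proof -
    have "s = (j-1)*n + (s - (j-1)*n)" "s - (j-1)*n \<in> {1..n}" using that jn by auto
    then show ?thesis using blk_decomp[OF n1 jl(1), of "s - (j-1)*n"] by metis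
  qed
  define A where "A = {x<..j*n}"
  have A: "\<pi> ` A \<subseteq> {(l-1)*n+1..<\<pi> x}"
  proof
    fix y assume "y \<in> \<pi> ` A"
    then obtain s where s: "s \<in> A" "y = \<pi> s" by auto
    have s1: "x < s" "s \<le> j * n" using s unfolding A_def by auto
    have "s \<le> n*k" using s1 jl2 ln kn by linarith
    then have sin: "s \<in> {1..n*k}" using s1 xin by auto
    have "blk n s = j" using blkS s1 x_def by auto
    then have bps: "blk n (\<pi> s) = l" using PF_bar[OF sin] jl by simp
    have psin: "\<pi> s \<in> {1..n*k}" using PF_in[OF sin] by simp
    have psb: "(l-1)*n + 1 \<le> \<pi> s" using PF_bounds[OF psin bps] by auto
    have ne: "\<pi> s \<noteq> \<pi> x" using PF_inv s1 by (metis less_irrefl)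
    have "\<pi> s < \<pi> x"
    proof (rule ccontr)
      assume "\<not> \<pi> s < \<pi> x"
      then have "\<pi> x < \<pi> s" using ne by auto
      moreover have "s < \<pi> x" using s1 jl2 pxb by linarith
      ultimately have "1 \<le> x \<and> x < s \<and> s < \<pi> x \<and> \<pi> x < \<pi> s \<and> \<pi> s \<le> n*k" using s1 xin psin by auto
      then show False using nc unfolding noncrossing_def by blast
    qed
    then show "y \<in> {(l-1)*n+1..<\<pi> x}" using psb s by auto
  qed
  have cA: "card A = j*n - x" unfolding A_def by simp
  have "card (\<pi> ` A) = card A" by (rule card_image[OF inj])
  then have c1: "j*n - x \<le> \<pi> x - ((l-1)*n+1)" using card_mono[OF _ A] cA by simp
  define B where "B = {(j-1)*n+1..<x}"
  have B: "\<pi> ` B \<subseteq> {\<pi> x<..l*n}"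
  proof
    fix y assume "y \<in> \<pi> ` B"
    then obtain s where s: "s \<in> B" "y = \<pi> s" by auto
    have s1: "(j-1)*n+1 \<le> s" "s < x" using s unfolding B_def by auto
    have sin: "s \<in> {1..n*k}" using s1 xin by auto
    have "blk n s = j" using blkS s1 x_def r jn by auto
    then have bps: "blk n (\<pi> s) = l" using PF_bar[OF sin] jl by simp
    have psin: "\<pi> s \<in> {1..n*k}" using PF_in[OF sin] by simp
    have psb: "(l-1)*n + 1 \<le> \<pi> s" "\<pi> s \<le> l * n" using PF_bounds[OF psin bps] by auto
    have ne: "\<pi> s \<noteq> \<pi> x" using PF_inv s1 by (metis less_irrefl)
    have "\<pi> x < \<pi> s"
    proof (rule ccontr)
      assume "\<not> \<pi> x < \<pi> s"
      then have "\<pi> s < \<pi> x" using ne by auto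
      moreover have "x < \<pi> s" using x_def rb jn jl2 psb by linarith
      ultimately have "1 \<le> s \<and> s < x \<and> x < \<pi> s \<and> \<pi> s < \<pi> x \<and> \<pi> x \<le> n*k" using s1 pxin by auto
      then show False using nc unfolding noncrossing_def by blast
    qed
    then show "y \<in> {\<pi> x<..l*n}" using psb s by auto
  qed
  have cB: "card B = x - ((j-1)*n+1)" unfolding B_def by simp
  have "card (\<pi> ` B) = card B" by (rule card_image[OF inj])
  then have c2: "x - ((j-1)*n+1) \<le> l*n - \<pi> x" using card_mono[OF _ B] cB by simp
  have "\<pi> x = l*n + 1 - r" using c1 c2 pxb jn ln rb x_def by linarith
  then show ?thesis unfolding x_def .
qed

lemma B_main:
  "noncrossing (n*k) \<pi> \<longleftrightarrow> noncrossing k (bar_pi n \<pi>) \<and>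
     (\<forall>j l. 1 \<le> j \<and> j < l \<and> l \<le> k \<and> bar_pi n \<pi> j = l \<longrightarrow>
        (\<forall>r\<in>{1..n}. \<pi> ((j - 1) * n + r) = l * n + 1 - r))"
proof
  assume nc: "noncrossing (n*k) \<pi>"
  have barnc: "noncrossing k (bar_pi n \<pi>)" unfolding noncrossing_def
  proof (intro allI impI notI)
    fix a b c d assume h: "1 \<le> a \<and> a < b \<and> b < c \<and> c < d \<and> d \<le> k"
      and e: "bar_pi n \<pi> a = c \<and> bar_pi n \<pi> b = d"
    define x where "x = (a-1)*n+1"
    define y where "y = (b-1)*n+1"
    have x: "x \<in> {1..n*k}" "blk n x = a" using PF_first[of a] h unfolding x_def by auto
    have y: "y \<in> {1..n*k}" "blk n y = b" using PF_first[of b] h unfolding y_def by auto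
    have bpx: "blk n (\<pi> x) = c" using PF_bar[OF x(1)] x e by simp
    have bpy: "blk n (\<pi> y) = d" using PF_bar[OF y(1)] y e by simp
    have "x < y" using blk_lt[of n x y] x y h by simp
    moreover have "y < \<pi> x" using blk_lt[of n y "\<pi> x"] y bpx h by simp
    moreover have "\<pi> x < \<pi> y" using blk_lt[of n "\<pi> x" "\<pi> y"] bpx bpy h by simp
    moreover have "\<pi> y \<le> n*k" using PF_in[OF y(1)] by simp
    moreover have "1 \<le> x" using x by simp
    ultimately show False using nc unfolding noncrossing_def by blast
  qed
  show "noncrossing k (bar_pi n \<pi>) \<and>
     (\<forall>j l. 1 \<le> j \<and> j < l \<and> l \<le> k \<and> bar_pi n \<pi> j = l \<longrightarrow>
        (\<forall>r\<in>{1..n}. \<pi> ((j - 1) * n + r) = l * n + 1 - r))"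
    using barnc B_fwd_rev[OF nc] by blast
next
  assume h: "noncrossing k (bar_pi n \<pi>) \<and>
     (\<forall>j l. 1 \<le> j \<and> j < l \<and> l \<le> k \<and> bar_pi n \<pi> j = l \<longrightarrow>
        (\<forall>r\<in>{1..n}. \<pi> ((j - 1) * n + r) = l * n + 1 - r))"
  then have barnc: "noncrossing k (bar_pi n \<pi>)"
    and rev: "\<And>j l r. 1 \<le> j \<Longrightarrow> j < l \<Longrightarrow> l \<le> k \<Longrightarrow> bar_pi n \<pi> j = l \<Longrightarrow> r \<in> {1..n} \<Longrightarrow>
        \<pi> ((j - 1) * n + r) = l * n + 1 - r" by blast+
  show "noncrossing (n*k) \<pi>" unfolding noncrossing_def
  proof (intro allI impI notI)
    fix a b c d assume h1: "1 \<le> a \<and> a < b \<and> b < c \<and> c < d \<and> d \<le> n*k" and e: "\<pi> a = c \<and> \<pi> b = d"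
    have ain: "a \<in> {1..n*k}" "b \<in> {1..n*k}" "c \<in> {1..n*k}" "d \<in> {1..n*k}" using h1 by auto
    define A where "A = blk n a"
    define B where "B = blk n b"
    define C where "C = blk n c"
    define D where "D = blk n d"
    have AC: "bar_pi n \<pi> A = C" using PF_bar[OF ain(1)] e unfolding A_def C_def by simp
    have BD: "bar_pi n \<pi> B = D" using PF_bar[OF ain(2)] e unfolding B_def D_def by simp
    have mono: "A \<le> B" "B \<le> C" "C \<le> D" unfolding A_def B_def C_def D_def using h1 blk_mono by auto
    have rng: "A \<in> {1..k}" "B \<in> {1..k}" "C \<in> {1..k}" "D \<in> {1..k}"
      using blk_range[OF n1] ain unfolding A_def B_def C_def D_def by auto
    have bA: "bar_pi n \<pi> (bar_pi n \<pi> A) = A" "bar_pi n \<pi> A \<noteq> A" using PF_barprops[OF rng(1)] by auto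
    have bB: "bar_pi n \<pi> (bar_pi n \<pi> B) = B" using PF_barprops[OF rng(2)] by auto
    have AneC: "A \<noteq> C" using AC bA by auto
    show False
    proof (cases "A = B")
      case True
      then have CD: "C = D" using AC BD by simp
      have AC2: "A < C" using AneC mono by simp
      obtain ra where ra: "a = (A-1)*n + ra" "ra \<in> {1..n}" using blk_decomp2[OF n1, of a] h1 unfolding A_def by auto
      obtain rb where rb: "b = (A-1)*n + rb" "rb \<in> {1..n}" using blk_decomp2[OF n1, of b] h1 True unfolding B_def A_def by auto
      have "c = C*n + 1 - ra" using rev[OF _ AC2 _ AC ra(2)] rng ra(1) e by auto
      moreover have "d = C*n + 1 - rb" using rev[OF _ AC2 _ AC rb(2)] rng rb(1) e by auto
      moreover have "ra < rb" using ra rb h1 by simp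
      moreover have "n \<le> C * n" using rng by simp
      ultimately show False using h1 rb(2) by auto
    next
      case False
      then have AB: "A < B" using mono by simp
      have BC: "B < C"
      proof (rule ccontr)
        assume "\<not> B < C"
        then have "B = C" using mono by simp
        then have "D = A" using BD AC bA by simp
        then show False using AB mono by simp
      qed
      have CD: "C < D"
      proof (rule ccontr)
        assume "\<not> C < D"
        then have "C = D" using mono by simp
        then have "A = B" using AC BD bA bB by metis
        then show False using AB by simp
      qed
      have "1 \<le> A \<and> A < B \<and> B < C \<and> C < D \<and> D \<le> k" using AB BC CD rng by auto
      then show False using barnc AC BD unfolding noncrossing_def by blast
    qed
  qed
qed

end


lemma aux1: fixes cc ss tt xx :: real assumes "xx \<ge> 0" "ss > 0"
  shows "tt * cc / ss * (1/2 - (xx+1)) / (xx+2) = (- tt) * (cc * (2*(2*xx+1)) / (xx+2)) / (4 * ss)"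
proof -
  have h: "xx + 2 \<noteq> 0" "ss \<noteq> 0" using assms by simp_all
  show ?thesis by (simp add: divide_simps h) (simp add: algebra_simps)
qed
lemma aux2: fixes F P x :: real assumes "x \<ge> 0" "P > 0"
  shows "((2*x+2)*(2*x+1)*F) / (((x+1)*P) * ((x+2)*((x+1)*P))) = F / (P * ((x+1)*P)) * (2*(2*x+1)) / (x+2)"
proof -
  have h: "x + 2 \<noteq> 0" "x + 1 \<noteq> 0" "P \<noteq> 0" using assms by simp_all
  show ?thesis by (simp add: divide_simps h) (simp add: algebra_simps)
qed
lemma catalan_fact: "catalan p = fact (2*p) / (fact p * fact (Suc p))"
proof -
  have "catalan p = fact (2*p) / (fact p * fact (2*p - p)) / real (p+1)"
    unfolding catalan_def using binomial_fact[of p "2*p", where 'a=real] by simp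
  also have "\<dots> = fact (2*p) / (fact p * fact (Suc p))"
    by (simp add: mult_2 field_simps)
  finally show ?thesis .
qed

lemma catalan_Suc: "catalan (Suc p) = catalan p * (2 * (2 * real p + 1)) / (real p + 2)"
proof -
  have f1: "fact (2*Suc p) = (2*real p+2)*(2*real p+1)*fact(2*p)"
  proof -
    have "2 * Suc p = Suc (Suc (2*p))" by simp
    then show ?thesis by (simp add: algebra_simps)
  qed
  have f2: "fact (Suc p) = (real p+1) * fact p" by simp
  have f3: "fact (Suc (Suc p)) = (real p+2) * ((real p+1) * fact p)" by (simp add: algebra_simps)
  have "catalan (Suc p) = ((2*real p+2)*(2*real p+1)*fact(2*p)) / (((real p+1) * fact p) * ((real p+2) * ((real p+1) * fact p)))"
    unfolding catalan_fact f1 f2 f3 ..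
  also have "\<dots> = fact (2*p) / (fact p * ((real p+1) * fact p)) * (2*(2*real p+1)) / (real p+2)"
    by (rule aux2) auto
  also have "fact (2*p) / (fact p * ((real p+1) * fact p)) = catalan p"
    unfolding catalan_fact f2 ..
  finally show ?thesis .
qed

lemma gb_half: "((1/2::real) gchoose (Suc j)) = (-1)^j * catalan j / 2^(2*j+1)"
proof (induction j)
  case 0
  then show ?case by (simp add: catalan_def)
next
  case (Suc j)
  have m: "(1/2::real) * ((1/2) gchoose (Suc j)) = of_nat (Suc j) * ((1/2) gchoose (Suc j)) + of_nat (Suc (Suc j)) * ((1/2) gchoose (Suc (Suc j)))"
    by (rule gbinomial_mult_1)
  then have "((1/2::real) gchoose (Suc (Suc j))) = ((1/2) gchoose (Suc j)) * (1/2 - real (Suc j)) / real (Suc (Suc j))"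
    by (simp add: field_simps)
  also have "\<dots> = (-1)^j * catalan j / 2^(2*j+1) * (1/2 - real (Suc j)) / real (Suc (Suc j))"
    using Suc by simp
  also have "\<dots> = (-1)^j * catalan j / 2^(2*j+1) * (1/2 - (real j + 1)) / (real j + 2)"
    by (simp add: add.commute)
  also have "\<dots> = (- ((-1)^j)) * (catalan j * (2*(2*real j+1)) / (real j+2)) / (4 * 2^(2*j+1))"
    by (rule aux1) auto
  also have "\<dots> = (-1)^(Suc j) * catalan (Suc j) / 2^(2*(Suc j)+1)"
    unfolding catalan_Suc by (simp add: power_add)
  finally show ?case .
qed

lemma catalan_rec: "catalan (Suc p) = (\<Sum>i=0..p. catalan i * catalan (p - i))"
proof -
  define g where "g k = ((1/2::real) gchoose k)" for k
  have V: "(\<Sum>k=0..Suc (Suc p). g k * g (Suc (Suc p) - k)) = 0"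
  proof -
    have "(\<Sum>k=0..Suc (Suc p). g k * g (Suc (Suc p) - k)) = ((1/2 + 1/2::real) gchoose (Suc (Suc p)))"
      unfolding g_def by (rule gbinomial_Vandermonde)
    also have "\<dots> = 0" using binomial_gbinomial[of 1 "Suc (Suc p)", where 'a=real] by simp
    finally show ?thesis .
  qed
  have split: "(\<Sum>k=0..Suc (Suc p). g k * g (Suc (Suc p) - k)) =
      g 0 * g (Suc (Suc p)) + (\<Sum>i=0..p. g (Suc i) * g (Suc (Suc p) - Suc i)) + g (Suc (Suc p)) * g 0"
  proof -
    define F where "F k = g k * g (Suc (Suc p) - k)" for k
    have "(\<Sum>k=0..Suc (Suc p). F k) = F 0 + (\<Sum>i=0..Suc p. F (Suc i))"
      using sum.atLeast0_atMost_Suc_shift[of F "Suc p"] by (simp add: comp_def)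
    also have "(\<Sum>i=0..Suc p. F (Suc i)) = (\<Sum>i=0..p. F (Suc i)) + F (Suc (Suc p))"
      by (rule sum.atLeast0_atMost_Suc)
    finally show ?thesis unfolding F_def by simp
  qed
  have g0: "g 0 = 1" unfolding g_def by simp
  have trm: "g (Suc i) * g (Suc (Suc p) - Suc i) = (-1)^p * (catalan i * catalan (p - i)) / 2^(2*p+2)"
    if "i \<in> {0..p}" for i
  proof -
    have e: "Suc (Suc p) - Suc i = Suc (p - i)" using that by auto
    have e2: "(-1::real)^i * (-1)^(p-i) = (-1)^p" using that by (simp add: power_add[symmetric])
    have e3: "(2::real)^(2*i+1) * 2^(2*(p-i)+1) = 2^(2*p+2)"
      using that by (simp add: power_add[symmetric])
    show ?thesis unfolding e g_def gb_half
      using e2 e3 by (simp add: field_simps)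
  qed
  have "(\<Sum>i=0..p. g (Suc i) * g (Suc (Suc p) - Suc i)) = (-1)^p / 2^(2*p+2) * (\<Sum>i=0..p. catalan i * catalan (p - i))"
  proof -
    have "(\<Sum>i=0..p. g (Suc i) * g (Suc (Suc p) - Suc i)) = (\<Sum>i=0..p. (-1)^p * (catalan i * catalan (p - i)) / 2^(2*p+2))"
      by (rule sum.cong[OF refl trm])
    also have "\<dots> = (\<Sum>i=0..p. (-1)^p / 2^(2*p+2) * (catalan i * catalan (p - i)))"
      by (rule sum.cong) auto
    also have "\<dots> = (-1)^p / 2^(2*p+2) * (\<Sum>i=0..p. catalan i * catalan (p - i))"
      by (rule sum_distrib_left[symmetric])
    finally show ?thesis .
  qed
  moreover have "g (Suc (Suc p)) = (-1)^(Suc p) * catalan (Suc p) / 2^(2*p+3)"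
  proof -
    have e: "2 * Suc p + 1 = 2*p+3" by simp
    show ?thesis using gb_half[of "Suc p"] unfolding g_def e .
  qed
  ultimately have "2 * ((-1)^(Suc p) * catalan (Suc p) / 2^(2*p+3)) + (-1)^p / 2^(2*p+2) * (\<Sum>i=0..p. catalan i * catalan (p - i)) = 0"
    using V split g0 by simp
  then show ?thesis by (simp add: field_simps power_add) 
qed


definition NCP :: "nat \<Rightarrow> (nat \<Rightarrow> nat) set" where
  "NCP m = {p. pair_partition m p \<and> noncrossing m p}"

lemma pp_in: "pair_partition m p \<Longrightarrow> x \<in> {1..m} \<Longrightarrow> p x \<in> {1..m} \<and> p x \<noteq> x \<and> p (p x) = x"
  unfolding pair_partition_def by blast

lemma pp_out: "pair_partition m p \<Longrightarrow> x \<notin> {1..m} \<Longrightarrow> p x = x"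
  unfolding pair_partition_def by blast

lemma pp_inv: "pair_partition m p \<Longrightarrow> p (p x) = x"
proof -
  assume pp: "pair_partition m p"
  show ?thesis
  proof (cases "x \<in> {1..m}")
    case True then show ?thesis using pp_in[OF pp True] by blast
  next
    case False then show ?thesis using pp_out[OF pp False] by simp
  qed
qed

lemma finite_pp: "finite {p. pair_partition m p}"
proof -
  let ?A = "{1..m}"
  let ?G = "{g. \<forall>x. (x \<in> ?A \<longrightarrow> g x \<in> ?A) \<and> (x \<notin> ?A \<longrightarrow> g x = 0)}"
  have "finite ?G" by (rule finite_set_of_finite_funs) auto
  moreover have "{p. pair_partition m p} \<subseteq> (\<lambda>g x. if x \<in> ?A then g x else x) ` ?G"
  proof
    fix p assume "p \<in> {p. pair_partition m p}"
    then have pp: "pair_partition m p" by simp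
    let ?g = "\<lambda>x. if x \<in> ?A then p x else 0"
    have "?g \<in> ?G" using pp_in[OF pp] by auto
    moreover have "p = (\<lambda>x. if x \<in> ?A then ?g x else x)" using pp_out[OF pp] by auto
    ultimately show "p \<in> (\<lambda>g x. if x \<in> ?A then g x else x) ` ?G"
      by (intro image_eqI[where x="?g"]) auto
  qed
  ultimately show ?thesis by (rule finite_surj)
qed

lemma finite_NCP: "finite (NCP m)"
proof (rule finite_subset[OF _ finite_pp])
  show "NCP m \<subseteq> {p. pair_partition m p}" unfolding NCP_def by blast
qed

lemma pp_even: "pair_partition m p \<Longrightarrow> even m"
proof -
  assume pp: "pair_partition m p"
  define A where "A = {x\<in>{1..m}. x < p x}"
  define B where "B = {x\<in>{1..m}. p x < x}"
  have lt: "x < p x \<or> p x < x" if "x \<in> {1..m}" for x using pp_in[OF pp that] by auto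
  have AB1: "A \<union> B = {1..m}"
  proof
    show "A \<union> B \<subseteq> {1..m}" unfolding A_def B_def by auto
    show "{1..m} \<subseteq> A \<union> B"
    proof
      fix x assume x: "x \<in> {1..m}"
      then show "x \<in> A \<union> B" using lt[OF x] unfolding A_def B_def by auto
    qed
  qed
  have AB2: "A \<inter> B = {}" unfolding A_def B_def by auto
  note AB = AB1 AB2
  have "p ` A = B"
  proof
    show "p ` A \<subseteq> B" using pp_in[OF pp] unfolding A_def B_def by auto
    show "B \<subseteq> p ` A"
    proof
      fix x assume "x \<in> B"
      then have "p x \<in> A" "x = p (p x)" using pp_in[OF pp] unfolding A_def B_def by auto
      then show "x \<in> p ` A" by blast
    qed
  qed
  moreover have "inj_on p A" by (rule inj_onI) (metis pp_inv[OF pp])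
  ultimately have "card B = card A" using card_image by metis
  moreover have "card (A \<union> B) = card A + card B" by (rule card_Un_disjoint) (auto simp: A_def B_def)
  ultimately have "m = 2 * card A" using AB by simp
  then show "even m" by simp
qed

lemma restr:
  assumes pp: "pair_partition m p"
    and cl: "\<And>x. lo < x \<Longrightarrow> x \<le> lo + len \<Longrightarrow> lo < p x \<and> p x \<le> lo + len"
    and bd: "lo + len \<le> m"
  shows "pair_partition len (\<lambda>x. if 1 \<le> x \<and> x \<le> len then p (x + lo) - lo else x)"
    and "noncrossing m p \<Longrightarrow> noncrossing len (\<lambda>x. if 1 \<le> x \<and> x \<le> len then p (x + lo) - lo else x)"
proof -
  let ?q = "\<lambda>x. if 1 \<le> x \<and> x \<le> len then p (x + lo) - lo else x"
  have qv: "?q x \<in> {1..len} \<and> ?q x + lo = p (x + lo)" if "x \<in> {1..len}" for x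
    using cl[of "x + lo"] that by auto
  show "pair_partition len ?q" unfolding pair_partition_def
  proof (intro conjI ballI allI impI)
    fix x assume x: "x \<in> {1..len}"
    have xm: "x + lo \<in> {1..m}" using x bd by auto
    show "?q x \<in> {1..len}" using qv[OF x] by blast
    show "?q x \<noteq> x" using qv[OF x] pp_in[OF pp xm] by auto
    have "?q (?q x) + lo = p (?q x + lo)" using qv[of "?q x"] qv[OF x] by blast
    also have "\<dots> = x + lo" using qv[OF x] pp_inv[OF pp] by simp
    finally show "?q (?q x) = x" by simp
  next
    fix x assume "x \<notin> {1..len}"
    then show "?q x = x" by auto
  qed
  assume nc: "noncrossing m p"
  show "noncrossing len ?q" unfolding noncrossing_def
  proof (intro allI impI notI)
    fix a b c d assume h: "1 \<le> a \<and> a < b \<and> b < c \<and> c < d \<and> d \<le> len" and e: "?q a = c \<and> ?q b = d"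
    have "p (a + lo) = c + lo" "p (b + lo) = d + lo" using qv[of a] qv[of b] h e by auto
    moreover have "1 \<le> a + lo \<and> a + lo < b + lo \<and> b + lo < c + lo \<and> c + lo < d + lo \<and> d + lo \<le> m"
      using h bd by auto
    ultimately show False using nc unfolding noncrossing_def by blast
  qed
qed

definition comb :: "nat \<Rightarrow> nat \<Rightarrow> (nat \<Rightarrow> nat) \<Rightarrow> (nat \<Rightarrow> nat) \<Rightarrow> nat \<Rightarrow> nat" where
  "comb t m p1 p2 x = (if x = 1 then t else if x = t then 1 else if 2 \<le> x \<and> x < t then p1 (x - 1) + 1
     else if t < x \<and> x \<le> m then p2 (x - t) + t else x)"

lemma comb_NCP:
  assumes t: "2 \<le> t" "t \<le> m" and p1: "p1 \<in> NCP (t-2)" and p2: "p2 \<in> NCP (m-t)"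
  shows "comb t m p1 p2 \<in> NCP m" "comb t m p1 p2 1 = t"
proof -
  have pp1: "pair_partition (t-2) p1" and nc1: "noncrossing (t-2) p1" using p1 unfolding NCP_def by auto
  have pp2: "pair_partition (m-t) p2" and nc2: "noncrossing (m-t) p2" using p2 unfolding NCP_def by auto
  let ?c = "comb t m p1 p2"
  show "?c 1 = t" unfolding comb_def by simp
  have c1: "?c 1 = t" "?c t = 1" using t unfolding comb_def by auto
  have cin: "?c x = p1 (x - 1) + 1 \<and> 2 \<le> ?c x \<and> ?c x < t \<and> p1 (x-1) \<noteq> x - 1 \<and> p1 (p1 (x - 1)) = x - 1"
    if "2 \<le> x" "x < t" for x
  proof -
    define y where "y = x - 1"
    have y: "y \<in> {1..t-2}" "x = y + 1" using that unfolding y_def by auto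
    have pv: "p1 y \<in> {1..t-2} \<and> p1 y \<noteq> y \<and> p1 (p1 y) = y" using pp_in[OF pp1 y(1)] .
    have "?c x = p1 y + 1" unfolding comb_def using that y by simp
    moreover have "p1 y + 1 < t" "2 \<le> p1 y + 1" using pv t by auto
    ultimately show ?thesis using pv unfolding y_def by simp
  qed
  have cout: "?c x = p2 (x - t) + t \<and> t < ?c x \<and> ?c x \<le> m \<and> p2 (x-t) \<noteq> x - t \<and> p2 (p2 (x - t)) = x - t"
    if "t < x" "x \<le> m" for x
  proof -
    define y where "y = x - t"
    have y: "y \<in> {1..m-t}" "x = y + t" using that unfolding y_def by auto
    have pv: "p2 y \<in> {1..m-t} \<and> p2 y \<noteq> y \<and> p2 (p2 y) = y" using pp_in[OF pp2 y(1)] .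
    have "?c x = p2 y + t" unfolding comb_def using that y t by simp
    moreover have "p2 y + t \<le> m" "t < p2 y + t" using pv t by auto
    ultimately show ?thesis using pv unfolding y_def by simp
  qed
  have inm: "?c x \<in> {1..m} \<and> ?c x \<noteq> x \<and> ?c (?c x) = x" if x: "x \<in> {1..m}" for x
  proof -
    consider "x = 1" | "x = t" | "2 \<le> x \<and> x < t" | "t < x \<and> x \<le> m" using x t by force
    then show ?thesis
    proof cases
      case 1 then show ?thesis using c1 t by auto
    next
      case 2 then show ?thesis using c1 t by auto
    next
      case 3
      have a: "?c x = p1 (x - 1) + 1" "2 \<le> ?c x" "?c x < t" using cin[of x] 3 by auto
      have "?c (?c x) = p1 (?c x - 1) + 1" using cin[of "?c x"] a by auto
      also have "\<dots> = x" using a cin[of x] 3 by auto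
      finally show ?thesis using a t cin[of x] 3 by auto
    next
      case 4
      have a: "?c x = p2 (x - t) + t" "t < ?c x" "?c x \<le> m" using cout[of x] 4 by auto
      have "?c (?c x) = p2 (?c x - t) + t" using cout[of "?c x"] a by auto
      also have "\<dots> = x" using a cout[of x] 4 by auto
      finally show ?thesis using a t cout[of x] 4 by auto
    qed
  qed
  have outm: "?c x = x" if "x \<notin> {1..m}" for x
    using that t unfolding comb_def by auto
  have pp: "pair_partition m ?c" unfolding pair_partition_def using inm outm by blast
  have nc: "noncrossing m ?c" unfolding noncrossing_def
  proof (intro allI impI notI)
    fix a b c d assume h: "1 \<le> a \<and> a < b \<and> b < c \<and> c < d \<and> d \<le> m" and e: "?c a = c \<and> ?c b = d"
    consider "a = 1" | "a = t" | "2 \<le> a \<and> a < t" | "t < a" using h t by force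
    then show False
    proof cases
      case 1
      then have "c = t" using c1 e by simp
      then have "d < t" using cin[of b] h e 1 by auto
      then show False using h \<open>c = t\<close> by auto
    next
      case 2
      then show False using c1 e h by auto
    next
      case 3
      have cc: "c = p1 (a - 1) + 1" "c < t" using cin[of a] 3 e by auto
      have bb: "2 \<le> b" "b < t" using h cc by auto
      have dd: "d = p1 (b - 1) + 1" "d < t" using cin[of b] bb e by auto
      have "1 \<le> a - 1 \<and> a - 1 < b - 1 \<and> b - 1 < c - 1 \<and> c - 1 < d - 1 \<and> d - 1 \<le> t - 2"
        using h 3 bb cc dd by auto
      moreover have "p1 (a - 1) = c - 1" "p1 (b - 1) = d - 1" using cc dd by auto
      ultimately show False using nc1 unfolding noncrossing_def by blast
    next
      case 4
      have cc: "c = p2 (a - t) + t" using cout[of a] 4 h e by auto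
      have dd: "d = p2 (b - t) + t" using cout[of b] 4 h e by auto
      have "1 \<le> a - t \<and> a - t < b - t \<and> b - t < c - t \<and> c - t < d - t \<and> d - t \<le> m - t"
        using h 4 by auto
      moreover have "p2 (a - t) = c - t" "p2 (b - t) = d - t" using cc dd by auto
      ultimately show False using nc2 unfolding noncrossing_def by blast
    qed
  qed
  show "?c \<in> NCP m" using pp nc unfolding NCP_def by simp
qed


lemma ncp_closure:
  assumes p: "p \<in> NCP m" and m: "m \<ge> 1"
  shows "p 1 \<in> {2..m}"
    and "\<And>x. 1 < x \<Longrightarrow> x \<le> 1 + (p 1 - 2) \<Longrightarrow> 1 < p x \<and> p x \<le> 1 + (p 1 - 2)"
    and "\<And>x. p 1 < x \<Longrightarrow> x \<le> p 1 + (m - p 1) \<Longrightarrow> p 1 < p x \<and> p x \<le> p 1 + (m - p 1)"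
proof -
  have pp: "pair_partition m p" and nc: "noncrossing m p" using p unfolding NCP_def by auto
  define t where "t = p 1"
  have one: "1 \<in> {1..m}" using m by auto
  have t: "t \<in> {1..m}" "t \<noteq> 1" "p t = 1" using pp_in[OF pp one] unfolding t_def by auto
  then show "p 1 \<in> {2..m}" unfolding t_def by auto
  have inner: "1 < p x \<and> p x \<le> 1 + (t - 2)" if x: "1 < x" "x \<le> 1 + (t - 2)" for x
  proof -
    have xm: "x \<in> {1..m}" using x t by auto
    have px: "p x \<in> {1..m}" "p x \<noteq> x" "p (p x) = x" using pp_in[OF pp xm] by auto
    have "p x \<noteq> 1"
    proof
      assume "p x = 1" then have "x = t" using px t_def by metis
      then show False using x t by auto
    qed
    moreover have "p x \<noteq> t"
    proof
      assume "p x = t" then have "x = 1" using px t by metis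
      then show False using x by auto
    qed
    moreover have "\<not> t < p x"
    proof
      assume "t < p x"
      then have "1 \<le> (1::nat) \<and> 1 < x \<and> x < t \<and> t < p x \<and> p x \<le> m" using x t px by auto
      then show False using nc t_def unfolding noncrossing_def by blast
    qed
    ultimately show ?thesis using px t by auto
  qed
  then show "\<And>x. 1 < x \<Longrightarrow> x \<le> 1 + (p 1 - 2) \<Longrightarrow> 1 < p x \<and> p x \<le> 1 + (p 1 - 2)"
    unfolding t_def by blast
  have "t < p x \<and> p x \<le> t + (m - t)" if x: "t < x" "x \<le> t + (m - t)" for x
  proof -
    have xm: "x \<in> {1..m}" using x t by auto
    have px: "p x \<in> {1..m}" "p x \<noteq> x" "p (p x) = x" using pp_in[OF pp xm] by auto
    have "p x \<noteq> 1"
    proof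
      assume "p x = 1" then have "x = t" using px t_def by metis
      then show False using x t by auto
    qed
    moreover have "p x \<noteq> t"
    proof
      assume "p x = t" then have "x = 1" using px t by metis
      then show False using x t by auto
    qed
    moreover have "\<not> p x < t"
    proof
      assume "p x < t"
      then have "1 < p x" "p x \<le> 1 + (t - 2)" using px \<open>p x \<noteq> 1\<close> t by auto
      then have "p (p x) \<le> 1 + (t - 2)" using inner by blast
      then show False using px x t by auto
    qed
    ultimately show ?thesis using px t by auto
  qed
  then show "\<And>x. p 1 < x \<Longrightarrow> x \<le> p 1 + (m - p 1) \<Longrightarrow> p 1 < p x \<and> p x \<le> p 1 + (m - p 1)"
    unfolding t_def by blast
qed

lemma comb_restr:
  assumes p: "p \<in> NCP m" and m: "m \<ge> 1"
  defines "q1 \<equiv> (\<lambda>x. if 1 \<le> x \<and> x \<le> p 1 - 2 then p (x + 1) - 1 else x)"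
    and "q2 \<equiv> (\<lambda>x. if 1 \<le> x \<and> x \<le> m - p 1 then p (x + p 1) - p 1 else x)"
  shows "q1 \<in> NCP (p 1 - 2)" "q2 \<in> NCP (m - p 1)" "comb (p 1) m q1 q2 = p"
proof -
  have pp: "pair_partition m p" and nc: "noncrossing m p" using p unfolding NCP_def by auto
  note cl = ncp_closure[OF p m]
  have t: "2 \<le> p 1" "p 1 \<le> m" using cl(1) by auto
  have b1: "1 + (p 1 - 2) \<le> m" using t by auto
  have b2: "p 1 + (m - p 1) \<le> m" using t by auto
  show "q1 \<in> NCP (p 1 - 2)" unfolding NCP_def q1_def
    using restr[OF pp cl(2) b1] restr(2)[OF pp cl(2) b1 nc] by auto
  show "q2 \<in> NCP (m - p 1)" unfolding NCP_def q2_def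
    using restr[OF pp cl(3) b2] restr(2)[OF pp cl(3) b2 nc] by auto
  show "comb (p 1) m q1 q2 = p"
  proof
    fix x
    consider "x = 1" | "x = p 1" | "2 \<le> x \<and> x < p 1" | "p 1 < x \<and> x \<le> m" | "x \<notin> {1..m}"
      using t by force
    then show "comb (p 1) m q1 q2 x = p x"
    proof cases
      case 1 then show ?thesis unfolding comb_def by simp
    next
      case 2 then show ?thesis using t pp_inv[OF pp, of 1] unfolding comb_def by simp
    next
      case 3
      have "1 < p x" using cl(2)[of x] 3 by auto
      then show ?thesis using 3 unfolding comb_def q1_def by auto
    next
      case 4
      have "p 1 < p x" using cl(3)[of x] 4 by auto
      then show ?thesis using 4 unfolding comb_def q2_def by auto
    next
      case 5
      then show ?thesis using pp_out[OF pp 5] t unfolding comb_def by auto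
    qed
  qed
qed

lemma comb_inj:
  assumes t: "2 \<le> t" "t \<le> m"
    and pp1: "pair_partition (t-2) p1" "pair_partition (t-2) p1'"
    and pp2: "pair_partition (m-t) p2" "pair_partition (m-t) p2'"
    and eq: "comb t m p1 p2 = comb t m p1' p2'"
  shows "p1 = p1' \<and> p2 = p2'"
proof
  show "p1 = p1'"
  proof
    fix y
    show "p1 y = p1' y"
    proof (cases "y \<in> {1..t-2}")
      case True
      have "comb t m p1 p2 (y+1) = p1 y + 1" "comb t m p1' p2' (y+1) = p1' y + 1"
        using True unfolding comb_def by auto
      then show ?thesis using eq by simp
    next
      case False
      then show ?thesis using pp_out[OF pp1(1)] pp_out[OF pp1(2)] by simp
    qed
  qed
  show "p2 = p2'"
  proof
    fix y
    show "p2 y = p2' y"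
    proof (cases "y \<in> {1..m-t}")
      case True
      have "comb t m p1 p2 (y+t) = p2 y + t" "comb t m p1' p2' (y+t) = p2' y + t"
        using True t unfolding comb_def by auto
      then show ?thesis using eq by simp
    next
      case False
      then show ?thesis using pp_out[OF pp2(1)] pp_out[OF pp2(2)] by simp
    qed
  qed
qed

lemma NCP_decomp:
  "NCP (2*q+2) = (\<Union>i\<in>{0..q}. (\<lambda>(a,b). comb (2*i+2) (2*q+2) a b) ` (NCP (2*i) \<times> NCP (2*(q-i))))"
proof
  show "NCP (2*q+2) \<subseteq> (\<Union>i\<in>{0..q}. (\<lambda>(a,b). comb (2*i+2) (2*q+2) a b) ` (NCP (2*i) \<times> NCP (2*(q-i))))"
  proof
    fix p assume p: "p \<in> NCP (2*q+2)"
    have m: "2*q+2 \<ge> (1::nat)" by simp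
    note cr = comb_restr[OF p m]
    have t: "p 1 \<in> {2..2*q+2}" using ncp_closure(1)[OF p m] .
    have ev: "even (p 1 - 2)" using cr(1) pp_even unfolding NCP_def by blast
    from ev obtain i where i: "p 1 - 2 = 2 * i" by (rule evenE)
    have p1: "p 1 = 2 * i + 2" using i t by auto
    have iq: "i \<in> {0..q}" using p1 t by auto
    have m2: "2*q+2 - p 1 = 2*(q-i)" using p1 iq by auto
    have "p = (\<lambda>(a,b). comb (2*i+2) (2*q+2) a b) (
        (\<lambda>x. if 1 \<le> x \<and> x \<le> p 1 - 2 then p (x + 1) - 1 else x),
        (\<lambda>x. if 1 \<le> x \<and> x \<le> 2*q+2 - p 1 then p (x + p 1) - p 1 else x))"
      using cr(3) p1 by simp
    moreover have "((\<lambda>x. if 1 \<le> x \<and> x \<le> p 1 - 2 then p (x + 1) - 1 else x),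
        (\<lambda>x. if 1 \<le> x \<and> x \<le> 2*q+2 - p 1 then p (x + p 1) - p 1 else x)) \<in> NCP (2*i) \<times> NCP (2*(q-i))"
      using cr(1,2) i m2 by simp
    ultimately show "p \<in> (\<Union>i\<in>{0..q}. (\<lambda>(a,b). comb (2*i+2) (2*q+2) a b) ` (NCP (2*i) \<times> NCP (2*(q-i))))"
      using iq by blast
  qed
  show "(\<Union>i\<in>{0..q}. (\<lambda>(a,b). comb (2*i+2) (2*q+2) a b) ` (NCP (2*i) \<times> NCP (2*(q-i)))) \<subseteq> NCP (2*q+2)"
  proof
    fix p assume "p \<in> (\<Union>i\<in>{0..q}. (\<lambda>(a,b). comb (2*i+2) (2*q+2) a b) ` (NCP (2*i) \<times> NCP (2*(q-i))))"
    then obtain i a b where i: "i \<in> {0..q}" "a \<in> NCP (2*i)" "b \<in> NCP (2*(q-i))" "p = comb (2*i+2) (2*q+2) a b"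
      by auto
    have e1: "2*i+2-2 = 2*i" by simp
    have e2: "2*q+2 - (2*i+2) = 2*(q-i)" using i by auto
    show "p \<in> NCP (2*q+2)" using comb_NCP(1)[of "2*i+2" "2*q+2" a b] i e1 e2 by auto
  qed
qed

lemma card_NCP_rec:
  "card (NCP (2*q+2)) = (\<Sum>i=0..q. card (NCP (2*i)) * card (NCP (2*(q-i))))"
proof -
  define A where "A i = (\<lambda>(a,b). comb (2*i+2) (2*q+2) a b) ` (NCP (2*i) \<times> NCP (2*(q-i)))" for i
  have fin: "finite (A i)" for i unfolding A_def using finite_NCP by auto
  have one: "p 1 = 2*i+2" if pA: "p \<in> A i" and iq: "i \<in> {0..q}" for p i
  proof -
    from pA obtain ab where pe: "p = (\<lambda>(a,b). comb (2*i+2) (2*q+2) a b) ab"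
      unfolding A_def by (rule imageE)
    then show ?thesis by (cases ab) (simp add: comb_def)
  qed
  have disj: "\<forall>i\<in>{0..q}. \<forall>j\<in>{0..q}. i \<noteq> j \<longrightarrow> A i \<inter> A j = {}"
  proof (intro ballI impI)
    fix i j assume ij: "i \<in> {0..q}" "j \<in> {0..q}" "i \<noteq> j"
    show "A i \<inter> A j = {}"
    proof (rule ccontr)
      assume "A i \<inter> A j \<noteq> {}"
      then obtain p where "p \<in> A i" "p \<in> A j" by blast
      then have "p 1 = 2*i+2" "p 1 = 2*j+2" using one ij by blast+
      then show False using ij by simp
    qed
  qed
  have cardA: "card (A i) = card (NCP (2*i)) * card (NCP (2*(q-i)))" if i: "i \<in> {0..q}" for i
  proof -
    have inj: "inj_on (\<lambda>(a,b). comb (2*i+2) (2*q+2) a b) (NCP (2*i) \<times> NCP (2*(q-i)))"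
    proof (rule inj_onI, clarify)
      fix a b a' b' assume h: "a \<in> NCP (2*i)" "b \<in> NCP (2*(q-i))" "a' \<in> NCP (2*i)" "b' \<in> NCP (2*(q-i))"
        "comb (2*i+2) (2*q+2) a b = comb (2*i+2) (2*q+2) a' b'"
      have e1: "2*i+2-2 = 2*i" by simp
      have e2: "2*q+2 - (2*i+2) = 2*(q-i)" using i by auto
      have "pair_partition (2*i+2-2) a" "pair_partition (2*i+2-2) a'"
        "pair_partition (2*q+2-(2*i+2)) b" "pair_partition (2*q+2-(2*i+2)) b'"
        using h e1 e2 unfolding NCP_def by auto
      then show "a = a' \<and> b = b'" using comb_inj[OF _ _ _ _ _ _ h(5)] i by auto
    qed
    show ?thesis unfolding A_def using card_image[OF inj] card_cartesian_product by metis
  qed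
  have "card (NCP (2*q+2)) = card (\<Union>i\<in>{0..q}. A i)" using NCP_decomp unfolding A_def by simp
  also have "\<dots> = (\<Sum>i=0..q. card (A i))" by (rule card_UN_disjoint) (use fin disj in auto)
  also have "\<dots> = (\<Sum>i=0..q. card (NCP (2*i)) * card (NCP (2*(q-i))))" by (rule sum.cong) (use cardA in auto)
  finally show ?thesis .
qed

lemma NCP_0: "NCP 0 = {id}"
proof
  show "NCP 0 \<subseteq> {id}"
  proof
    fix p assume "p \<in> NCP 0"
    then have "\<forall>i. p i = i" unfolding NCP_def pair_partition_def by auto
    then show "p \<in> {id}" by auto
  qed
  show "{id} \<subseteq> NCP 0" unfolding NCP_def pair_partition_def noncrossing_def by auto
qed

theorem card_NCP: "real (card (NCP (2*q))) = catalan q"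
proof (induction q rule: less_induct)
  case (less q)
  show ?case
  proof (cases q)
    case 0
    then show ?thesis using NCP_0 by (simp add: catalan_def)
  next
    case (Suc q')
    have "real (card (NCP (2*q))) = real (card (NCP (2*q'+2)))" using Suc by simp
    also have "\<dots> = (\<Sum>i=0..q'. real (card (NCP (2*i))) * real (card (NCP (2*(q'-i)))))"
      unfolding card_NCP_rec by simp
    also have "\<dots> = (\<Sum>i=0..q'. catalan i * catalan (q'-i))"
      by (rule sum.cong) (use less Suc in auto)
    also have "\<dots> = catalan q" using catalan_rec Suc by simp
    finally show ?thesis .
  qed
qed


definition REV :: "nat \<Rightarrow> nat \<Rightarrow> (nat \<Rightarrow> nat) \<Rightarrow> bool" where
  "REV n k \<pi> \<longleftrightarrow> (\<forall>j l. 1 \<le> j \<and> j < l \<and> l \<le> k \<and> bar_pi n \<pi> j = l \<longrightarrow>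
                  (\<forall>r\<in>{1..n}. \<pi> ((j - 1) * n + r) = l * n + 1 - r))"

definition Gs :: "nat \<Rightarrow> nat \<Rightarrow> (nat \<Rightarrow> nat) set" where
  "Gs n k = {\<pi> \<in> PiNK n k. noncrossing k (bar_pi n \<pi>) \<and> REV n k \<pi>}"

definition Phi :: "nat \<Rightarrow> nat \<Rightarrow> (nat \<Rightarrow> nat) \<Rightarrow> nat \<Rightarrow> nat" where
  "Phi n k \<pi> = (\<lambda>j. if j \<in> {1..k} then bar_pi n \<pi> j else j)"

definition Psi :: "nat \<Rightarrow> nat \<Rightarrow> (nat \<Rightarrow> nat) \<Rightarrow> nat \<Rightarrow> nat" where
  "Psi n k p = (\<lambda>i. if i \<in> {1..n*k} then (p (blk n i) + blk n i - 1) * n + 1 - i else i)"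

lemma G_formula:
  assumes n1: "n \<ge> 1" and G: "\<pi> \<in> Gs n k" and i: "i \<in> {1..n*k}"
  shows "\<pi> i = (bar_pi n \<pi> (blk n i) + blk n i - 1) * n + 1 - i"
proof -
  have piNK: "\<pi> \<in> PiNK n k" and rev: "REV n k \<pi>" using G unfolding Gs_def by auto
  define j where "j = blk n i"
  define l where "l = bar_pi n \<pi> j"
  define r where "r = i - (j-1)*n"
  have jk: "j \<in> {1..k}" using blk_range[OF n1 i] unfolding j_def .
  have ir: "i = (j-1)*n + r" "r \<in> {1..n}" using blk_decomp2[OF n1, of i] i unfolding j_def r_def by auto
  have lp: "l \<in> {1..k}" "l \<noteq> j" "bar_pi n \<pi> l = j" using PF_barprops[OF n1 piNK jk] unfolding l_def by auto
  have jn: "j * n = (j-1)*n + n" using jk by (cases j) auto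
  have ln: "l * n = (l-1)*n + n" using lp by (cases l) auto
  have ljn: "(l + j - 1) * n = l * n + (j-1)*n" using jk by (cases j) (auto simp: algebra_simps)
  consider "j < l" | "l < j" using lp by linarith
  then have "\<pi> i = l * n + 1 - r"
  proof cases
    case 1
    then show ?thesis using rev jk lp ir unfolding REV_def l_def by auto
  next
    case 2
    have r': "n + 1 - r \<in> {1..n}" using ir by auto
    have "\<pi> ((l - 1) * n + (n + 1 - r)) = j * n + 1 - (n + 1 - r)"
      using rev lp jk 2 r' unfolding REV_def by auto
    also have "\<dots> = i" using ir jn by auto
    finally have "\<pi> i = \<pi> (\<pi> ((l - 1) * n + (n + 1 - r)))" by simp
    also have "\<dots> = (l - 1) * n + (n + 1 - r)" using PF_inv[OF n1 piNK] by simp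
    finally show ?thesis using ln ir by auto
  qed
  then show ?thesis using ljn ir jn unfolding j_def[symmetric] l_def[symmetric] by auto
qed

lemma Phi_NCP:
  assumes n1: "n \<ge> 1" and G: "\<pi> \<in> Gs n k"
  shows "Phi n k \<pi> \<in> NCP k"
proof -
  have piNK: "\<pi> \<in> PiNK n k" and nc: "noncrossing k (bar_pi n \<pi>)" using G unfolding Gs_def by auto
  have pp: "pair_partition k (Phi n k \<pi>)" unfolding pair_partition_def Phi_def
    using PF_barprops[OF n1 piNK] by auto
  have "noncrossing k (Phi n k \<pi>)" unfolding noncrossing_def
  proof (intro allI impI notI)
    fix a b c d assume h: "1 \<le> a \<and> a < b \<and> b < c \<and> c < d \<and> d \<le> k" and e: "Phi n k \<pi> a = c \<and> Phi n k \<pi> b = d"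
    then have "bar_pi n \<pi> a = c \<and> bar_pi n \<pi> b = d" unfolding Phi_def by auto
    then show False using h nc unfolding noncrossing_def by blast
  qed
  then show ?thesis using pp unfolding NCP_def by simp
qed

lemma Phi_inj:
  assumes n1: "n \<ge> 1"
  shows "inj_on (Phi n k) (Gs n k)"
proof (rule inj_onI)
  fix \<pi>1 \<pi>2 assume G: "\<pi>1 \<in> Gs n k" "\<pi>2 \<in> Gs n k" and e: "Phi n k \<pi>1 = Phi n k \<pi>2"
  have piNK: "\<pi>1 \<in> PiNK n k" "\<pi>2 \<in> PiNK n k" using G unfolding Gs_def by auto
  show "\<pi>1 = \<pi>2"
  proof
    fix i
    show "\<pi>1 i = \<pi>2 i"
    proof (cases "i \<in> {1..n*k}")
      case True
      have jk: "blk n i \<in> {1..k}" using blk_range[OF n1 True] .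
      have "bar_pi n \<pi>1 (blk n i) = bar_pi n \<pi>2 (blk n i)" using e jk unfolding Phi_def by metis
      then show ?thesis using G_formula[OF n1 G(1) True] G_formula[OF n1 G(2) True] by simp
    next
      case False
      then show ?thesis using PF_out[OF n1 piNK(1)] PF_out[OF n1 piNK(2)] by simp
    qed
  qed
qed

lemma Psi_val:
  assumes n1: "n \<ge> 1" and p: "pair_partition k p" and j: "j \<in> {1..k}" and r: "r \<in> {1..n}"
  shows "Psi n k p ((j-1)*n + r) = (p j - 1) * n + (n + 1 - r)"
    and "(p j - 1) * n + (n + 1 - r) \<in> {1..n*k}" and "blk n ((p j - 1) * n + (n + 1 - r)) = p j"
proof -
  have i: "(j-1)*n + r \<in> {1..n*k}" using blk_in[OF n1 j r] .
  have b: "blk n ((j-1)*n + r) = j" using blk_decomp[OF n1 _ r] j by auto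
  have pj: "p j \<in> {1..k}" using pp_in[OF p j] by simp
  have r': "n + 1 - r \<in> {1..n}" using r by auto
  have jn: "(p j + j - 1) * n = (p j - 1) * n + (j - 1) * n + n" using pj j
    by (cases j; cases "p j") (auto simp: algebra_simps)
  show "Psi n k p ((j-1)*n + r) = (p j - 1) * n + (n + 1 - r)"
    unfolding Psi_def using i b jn r by auto
  show "(p j - 1) * n + (n + 1 - r) \<in> {1..n*k}" using blk_in[OF n1 pj r'] .
  show "blk n ((p j - 1) * n + (n + 1 - r)) = p j" using blk_decomp[OF n1 _ r'] pj by auto
qed

lemma Psi_G:
  assumes n1: "n \<ge> 1" and p: "p \<in> NCP k"
  shows "Psi n k p \<in> Gs n k" "Phi n k (Psi n k p) = p"
proof -
  have pp: "pair_partition k p" and nc: "noncrossing k p" using p unfolding NCP_def by auto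
  let ?s = "Psi n k p"
  have dec: "\<exists>j r. j \<in> {1..k} \<and> r \<in> {1..n} \<and> i = (j-1)*n + r \<and> blk n i = j" if i: "i \<in> {1..n*k}" for i
  proof -
    have "blk n i \<in> {1..k}" using blk_range[OF n1 i] .
    then show ?thesis using blk_decomp2[OF n1, of i] i by auto
  qed
  have inv: "?s i \<in> {1..n*k} \<and> blk n (?s i) = p (blk n i) \<and> ?s (?s i) = i" if i: "i \<in> {1..n*k}" for i
  proof -
    obtain j r where jr: "j \<in> {1..k}" "r \<in> {1..n}" "i = (j-1)*n + r" "blk n i = j" using dec[OF i] by blast
    note v = Psi_val[OF n1 pp jr(1,2)]
    have pj: "p j \<in> {1..k}" "p (p j) = j" using pp_in[OF pp jr(1)] by auto
    have r': "n + 1 - r \<in> {1..n}" using jr by auto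
    have "?s (?s i) = (p (p j) - 1) * n + (n + 1 - (n + 1 - r))"
      using v(1) Psi_val(1)[OF n1 pp pj(1) r'] jr by simp
    also have "\<dots> = i" using pj jr by auto
    finally show ?thesis using v jr by simp
  qed
  have out: "?s i = i" if "i \<notin> {1..n*k}" for i using that by (auto simp: Psi_def)
  have ne: "blk n (?s i) \<noteq> blk n i" if i: "i \<in> {1..n*k}" for i
    using inv[OF i] pp_in[OF pp blk_range[OF n1 i]] by simp
  have spp: "pair_partition (n*k) ?s" unfolding pair_partition_def
  proof (intro conjI ballI allI impI)
    fix i assume i: "i \<in> {1..n*k}"
    show "?s i \<in> {1..n*k}" using inv[OF i] by simp
    show "?s i \<noteq> i" using ne[OF i] by auto
    show "?s (?s i) = i" using inv[OF i] by simp
  next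
    fix i assume "i \<notin> {1..n*k}" then show "?s i = i" by (rule out)
  qed
  have sPi: "?s \<in> PiNK n k" unfolding PiNK_def P2_def using spp ne inv by auto
  have bar: "bar_pi n ?s j = p j" if j: "j \<in> {1..k}" for j
  proof -
    have "(j-1)*n + 1 \<in> {1..n*k}" "blk n ((j-1)*n + 1) = j" using PF_first[OF n1 sPi j] by auto
    then show ?thesis unfolding bar_pi_def using inv by metis
  qed
  have bnc: "noncrossing k (bar_pi n ?s)" unfolding noncrossing_def
  proof (intro allI impI notI)
    fix a b c d assume h: "1 \<le> a \<and> a < b \<and> b < c \<and> c < d \<and> d \<le> k" and e: "bar_pi n ?s a = c \<and> bar_pi n ?s b = d"
    then have "p a = c \<and> p b = d" using bar[of a] bar[of b] by auto
    then show False using h nc unfolding noncrossing_def by blast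
  qed
  have rev: "REV n k ?s" unfolding REV_def
  proof (intro allI impI ballI)
    fix j l r assume h: "1 \<le> j \<and> j < l \<and> l \<le> k \<and> bar_pi n ?s j = l" and r: "r \<in> {1..n}"
    have jk: "j \<in> {1..k}" using h by auto
    have pj: "p j = l" using bar[OF jk] h by simp
    have ln: "l * n = (l-1)*n + n" using h by (cases l) auto
    show "?s ((j - 1) * n + r) = l * n + 1 - r" using Psi_val(1)[OF n1 pp jk r] pj ln r by auto
  qed
  show "?s \<in> Gs n k" unfolding Gs_def using sPi bnc rev by simp
  show "Phi n k ?s = p"
  proof
    fix j show "Phi n k ?s j = p j"
      unfolding Phi_def using bar pp_out[OF pp, of j] by auto
  qed
qed

lemma card_G: "n \<ge> 1 \<Longrightarrow> card (Gs n k) = card (NCP k)"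
proof -
  assume n1: "n \<ge> 1"
  have "Phi n k ` Gs n k = NCP k"
  proof
    show "Phi n k ` Gs n k \<subseteq> NCP k" using Phi_NCP[OF n1] by auto
    show "NCP k \<subseteq> Phi n k ` Gs n k"
    proof
      fix p assume p: "p \<in> NCP k"
      show "p \<in> Phi n k ` Gs n k" using Psi_G[OF n1 p] by (metis image_eqI)
    qed
  qed
  moreover have "card (Phi n k ` Gs n k) = card (Gs n k)" by (rule card_image[OF Phi_inj[OF n1]])
  ultimately show ?thesis by simp
qed


lemma finite_PiNK: "finite (PiNK n k)"
proof (rule finite_subset[OF _ finite_pp[of "n*k"]])
  show "PiNK n k \<subseteq> {p. pair_partition (n*k) p}" unfolding PiNK_def P2_def by blast
qed

lemma part1:
  assumes n1: "n \<ge> 1" and piNK: "\<pi> \<in> PiNK n k"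
  shows "2 * cyc0 (n*k) (\<pi> \<circ> alpha (n*k)) \<le> n*k \<and>
            (2 * cyc0 (n*k) (\<pi> \<circ> alpha (n*k)) = n*k \<longleftrightarrow>
               noncrossing k (bar_pi n \<pi>) \<and>
               (\<forall>j l. 1 \<le> j \<and> j < l \<and> l \<le> k \<and> bar_pi n \<pi> j = l \<longrightarrow>
                  (\<forall>r\<in>{1..n}. \<pi> ((j - 1) * n + r) = l * n + 1 - r)))"
  using A_final[OF PF_pp[OF n1 piNK]] B_main[OF n1 piNK] by simp

lemma powr_lim:
  assumes "e \<ge> (0::real)"
  shows "((\<lambda>N::nat. real N powr (- e)) \<longlongrightarrow> (if e = 0 then 1 else 0)) sequentially"
proof (cases "e = 0")
  case True
  have "eventually (\<lambda>N::nat. real N powr (- e) = 1) sequentially"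
    using eventually_ge_at_top[of "1::nat"] by eventually_elim (use True in auto)
  then show ?thesis using True by (simp add: tendsto_eventually)
next
  case False
  then have "- e < 0" using assms by simp
  then have "((\<lambda>N::nat. real N powr (- e)) \<longlongrightarrow> 0) sequentially"
    by (rule tendsto_neg_powr) (rule filterlim_real_sequentially)
  then show ?thesis using False by simp
qed

lemma part2:
  assumes n1: "n \<ge> 1" and k: "even k"
  shows "((\<lambda>N::nat. K k n (real N)) \<longlonglongrightarrow> catalan (k div 2))"
proof -
  define e where "e \<pi> = real (n*k) / 2 - real (cyc0 (n*k) (\<pi> \<circ> alpha (n*k)))" for \<pi>
  have e0: "e \<pi> \<ge> 0" if "\<pi> \<in> PiNK n k" for \<pi>
    using part1[OF n1 that] unfolding e_def by linarith
  have eq0: "e \<pi> = 0 \<longleftrightarrow> \<pi> \<in> Gs n k" if p: "\<pi> \<in> PiNK n k" for \<pi>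
  proof -
    have "e \<pi> = 0 \<longleftrightarrow> 2 * cyc0 (n*k) (\<pi> \<circ> alpha (n*k)) = n*k" unfolding e_def by linarith
    then show ?thesis using part1[OF n1 p] p unfolding Gs_def REV_def by auto
  qed
  have K: "K k n (real N) = (\<Sum>\<pi>\<in>PiNK n k. real N powr (- e \<pi>))" for N
    unfolding K_def e_def ..
  have "((\<lambda>N::nat. \<Sum>\<pi>\<in>PiNK n k. real N powr (- e \<pi>)) \<longlongrightarrow> (\<Sum>\<pi>\<in>PiNK n k. if e \<pi> = 0 then 1 else 0)) sequentially"
    by (rule tendsto_sum) (rule powr_lim[OF e0])
  moreover have "(\<Sum>\<pi>\<in>PiNK n k. if e \<pi> = 0 then 1 else (0::real)) = real (card (Gs n k))"
  proof -
    have "(\<Sum>\<pi>\<in>PiNK n k. if e \<pi> = 0 then 1 else (0::real)) = (\<Sum>\<pi>\<in>PiNK n k. if \<pi> \<in> Gs n k then 1 else 0)"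
      by (rule sum.cong) (use eq0 in auto)
    also have "\<dots> = real (card (Gs n k))"
    proof -
      have "Gs n k \<subseteq> PiNK n k" unfolding Gs_def by auto
      then show ?thesis using finite_PiNK[of n k]
        by (simp add: sum.If_cases Int_absorb1)
    qed
    finally show ?thesis .
  qed
  moreover have "real (card (Gs n k)) = catalan (k div 2)"
  proof -
    have "k = 2 * (k div 2)" using k by simp
    then have "card (NCP k) = card (NCP (2 * (k div 2)))" by simp
    then show ?thesis using card_G[OF n1, of k] card_NCP[of "k div 2"] by simp
  qed
  ultimately show ?thesis unfolding K by simp
qed

theorem mainTheorem11:
  fixes n k :: nat
  assumes "n \<ge> 1" and "k \<ge> 2" and "even k"
  shows "(\<forall>\<pi>\<in>PiNK n k.
            2 * cyc0 (n*k) (\<pi> \<circ> alpha (n*k)) \<le> n*k \<and>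
            (2 * cyc0 (n*k) (\<pi> \<circ> alpha (n*k)) = n*k \<longleftrightarrow>
               noncrossing k (bar_pi n \<pi>) \<and>
               (\<forall>j l. 1 \<le> j \<and> j < l \<and> l \<le> k \<and> bar_pi n \<pi> j = l \<longrightarrow>
                  (\<forall>r\<in>{1..n}. \<pi> ((j - 1) * n + r) = l * n + 1 - r))))
         \<and> ((\<lambda>N::nat. K k n (real N)) \<longlonglongrightarrow> catalan (k div 2))"
  using part1[OF assms(1)] part2[OF assms(1) assms(3)] by blast

end
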